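(* Let $X$ be a real Hilbert space with inner product $\langle\cdot,\cdot\rangle$ and norm $|x|=\sqrt{\langle x,x\rangle}$, let $G:X\to[0,\infty)$ and $Z=\{z\in X:G(z)\le1\}$. Assume that the gradient $\nabla G(x)$ exists for every $x\in X$ and that there are positive constants $\lambda,c$ and a continuous increasing function $\mu:[0,\infty)\to[0,\infty)$ with $\mu(0)=0$, $\lim_{s\to\infty}\mu(s)=\infty$, such that (i) $G(x)=1\Rightarrow|\nabla G(x)|\ge c$ for all $x\in X$; (ii) $|\nabla G(x)-\nabla G(y)|\le\mu(|x-y|)$ for all $x,y\in Z$; (iii) $\langle\nabla G(x)-\nabla G(z),x-z\rangle\ge-\lambda|x-z|^2$ for all $x\in\partial Z$, $z\in Z$. Let $r=c/\lambda$. Then for all $x\in\partial Z$ and $z\in Z$, $$\langle\nabla G(x),x-z\rangle+\frac{|\nabla G(x)|}{2r}|x-z|^2\ge0.$$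
   Context: The gradient $\nabla G(x)\in X$ is defined by $\langle\nabla G(x),y\rangle=\lim_{t\to0}\frac1t(G(x+ty)-G(x))$ for all $y\in X$. $\partial Z$ denotes the boundary of $Z$. *)

theory Defs
  imports "HOL-Analysis.Analysis"
begin

definition is_gradient :: "('a::real_inner \<Rightarrow> real) \<Rightarrow> 'a \<Rightarrow> 'a \<Rightarrow> bool" where
  "is_gradient G x g \<longleftrightarrow>
     (\<forall>y. ((\<lambda>t. (G (x + t *\<^sub>R y) - G x) / t) \<longlongrightarrow> inner g y) (at 0))"

end

theory Submission
  imports Defs
begin


lemma barrier:
  fixes phi phi' :: "real \<Rightarrow> real" and K T :: real
  assumes D: "\<And>t. (phi has_real_derivative phi' t) (at t)"
    and p0: "phi 0 \<le> 1"
    and lt: "\<And>t. 0 < t \<Longrightarrow> t \<le> T \<Longrightarrow> phi 0 + K*t < 1"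
    and bd: "\<And>t. 0 \<le> t \<Longrightarrow> t \<le> T \<Longrightarrow> phi t \<le> 1 \<Longrightarrow> phi' t \<le> K"
    and t: "0 \<le> t" "t \<le> T"
  shows "phi t \<le> phi 0 + K*t"
proof (rule ccontr)
  assume neg: "\<not> ?thesis"
  define g where "g = (\<lambda>r. phi r - phi 0 - K*r)"
  have gt1: "g t > 0" using neg by (simp add: g_def)
  have Dg: "\<And>s. (g has_real_derivative (phi' s - K)) (at s)"
    unfolding g_def by (auto intro!: derivative_eq_intros D)
  have contg: "continuous_on UNIV g"
    using Dg by (meson DERIV_isCont continuous_at_imp_continuous_on)
  have contphi: "\<And>s. isCont phi s" using D by (meson DERIV_isCont)
  define A where "A = {0..t} \<inter> {s. g s \<le> 0}"
  have "closed {s. g s \<le> 0}" using closed_Collect_le[OF contg continuous_on_const] by simp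
  hence clA: "closed A" unfolding A_def by (simp add: closed_Int)
  have "0 \<in> A" unfolding A_def g_def using t by auto
  hence neA: "A \<noteq> {}" by auto
  have bdA: "bdd_above A" unfolding A_def by (auto intro: bdd_aboveI[of _ t])
  define s where "s = Sup A"
  have sA: "s \<in> A" unfolding s_def using closed_contains_Sup[OF neA bdA clA] .
  have s0: "0 \<le> s" and st: "s \<le> t" and gs: "g s \<le> 0" using sA unfolding A_def by auto
  have "s \<noteq> t" using gs gt1 by auto
  hence st': "s < t" using st by auto
  have gpos: "\<And>r. s < r \<Longrightarrow> r \<le> t \<Longrightarrow> g r > 0"
  proof (rule ccontr)
    fix r assume "s < r" "r \<le> t" "\<not> g r > 0"
    hence "r \<in> A" unfolding A_def using s0 by auto
    hence "r \<le> s" unfolding s_def by (rule cSup_upper[OF _ bdA])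
    thus False using \<open>s < r\<close> by auto
  qed
  have "\<exists>d>0. \<forall>h>0. h < d \<longrightarrow> phi (s + h) < 1"
  proof (cases "phi s < 1")
    case True
    have "isCont phi s" by (rule contphi)
    then obtain d where "d > 0" and d: "\<And>y. dist y s < d \<Longrightarrow> dist (phi y) (phi s) < 1 - phi s"
      using True unfolding continuous_at_eps_delta by (metis diff_gt_0_iff_gt)
    show ?thesis
    proof (intro exI[of _ d] conjI allI impI)
      fix h :: real assume "h > 0" "h < d"
      hence "dist (s+h) s < d" by (simp add: dist_real_def)
      from d[OF this] show "phi (s+h) < 1" by (simp add: dist_real_def abs_less_iff)
    qed (rule \<open>d > 0\<close>)
  next
    case False
    have "phi s \<le> 1"
    proof (cases "s = 0")
      case True thus ?thesis using p0 by simp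
    next
      case False
      hence "phi 0 + K * s < 1" using lt[of s] s0 st t by auto
      thus ?thesis using gs by (simp add: g_def)
    qed
    hence ps1: "phi s = 1" using False by auto
    have s00: "s = 0"
    proof (rule ccontr)
      assume "s \<noteq> 0"
      hence "phi 0 + K * s < 1" using lt[of s] s0 st t by auto
      thus False using gs ps1 by (simp add: g_def)
    qed
    have "phi 0 + K * t < 1" using lt[of t] st' s00 t by auto
    hence "K < 0" using ps1 s00 st' s00 by (smt (verit) mult_nonneg_nonneg)
    have "phi' s \<le> K" using bd[of s] s0 st t ps1 by auto
    hence "phi' s < 0" using \<open>K < 0\<close> by auto
    from DERIV_neg_dec_right[OF D this] show ?thesis using ps1 by auto
  qed
  then obtain d where d0: "d > 0" and d: "\<And>h. h > 0 \<Longrightarrow> h < d \<Longrightarrow> phi (s + h) < 1" by blast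
  define t2 where "t2 = min (s + d/2) t"
  have t2: "s < t2" "t2 \<le> t" using d0 st' unfolding t2_def by auto
  obtain z where z: "s < z" "z < t2" "g t2 - g s = (t2 - s) * (phi' z - K)"
    using MVT2[OF t2(1), of g "\<lambda>s. phi' s - K"] Dg by blast
  have "phi z < 1" using d[of "z - s"] z t2 d0 unfolding t2_def by auto
  hence "phi' z \<le> K" using bd[of z] z t2 s0 t by auto
  hence "(t2 - s) * (phi' z - K) \<le> 0" using z by (intro mult_nonneg_nonpos) auto
  hence "g t2 \<le> g s" using z(3) by linarith
  thus False using gpos[OF t2] gs by auto
qed


locale lsetup =
  fixes G :: "'a::{real_inner, complete_space} \<Rightarrow> real"
    and gradG :: "'a \<Rightarrow> 'a"
    and mu :: "real \<Rightarrow> real"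
    and lam c :: real
  assumes G_nonneg: "\<And>x. G x \<ge> 0"
    and grad: "\<And>x. is_gradient G x (gradG x)"
    and lam_pos: "lam > 0" and c_pos: "c > 0"
    and mu_cont: "continuous_on {0..} mu"
    and mu_mono: "mono_on {0..} mu"
    and mu_nonneg: "\<And>s. s \<ge> 0 \<Longrightarrow> mu s \<ge> 0"
    and mu_0: "mu 0 = 0"
    and mu_inf: "filterlim mu at_top at_top"
    and i: "\<And>x. G x = 1 \<Longrightarrow> norm (gradG x) \<ge> c"
    and ii: "\<And>x y. x \<in> {z. G z \<le> 1} \<Longrightarrow> y \<in> {z. G z \<le> 1} \<Longrightarrow>
               norm (gradG x - gradG y) \<le> mu (norm (x - y))"
    and iii: "\<And>x z. x \<in> frontier {z. G z \<le> 1} \<Longrightarrow> z \<in> {z. G z \<le> 1} \<Longrightarrow>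
               inner (gradG x - gradG z) (x - z) \<ge> - lam * (norm (x - z))\<^sup>2"
begin

abbreviation "Z \<equiv> {z. G z \<le> 1}"

lemma norm3: "norm (a + b + (e::'a)) \<le> norm a + norm b + norm e"
  by (rule order_trans[OF norm_triangle_ineq]) (simp add: norm_triangle_ineq)

lemma line_deriv:
  "((\<lambda>s. G (p + s *\<^sub>R u)) has_real_derivative inner (gradG (p + t *\<^sub>R u)) u) (at t)"
proof -
  have "((\<lambda>h. (G (p + t *\<^sub>R u + h *\<^sub>R u) - G (p + t *\<^sub>R u)) / h) \<longlongrightarrow> inner (gradG (p + t *\<^sub>R u)) u) (at 0)"
    using grad[of "p + t *\<^sub>R u"] unfolding is_gradient_def by blast
  moreover have "\<And>h. p + (t + h) *\<^sub>R u = p + t *\<^sub>R u + h *\<^sub>R u" by (simp add: scaleR_add_left algebra_simps)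
  ultimately show ?thesis unfolding DERIV_def by (simp add: add.assoc)
qed

lemma line_cont: "isCont (\<lambda>s. G (p + s *\<^sub>R u)) t"
  using line_deriv by (rule DERIV_isCont)

lemma mu_le: "0 \<le> r \<Longrightarrow> r \<le> s \<Longrightarrow> mu r \<le> mu s"
  using mu_mono by (auto intro: mono_onD)

lemma mu_small: "e > 0 \<Longrightarrow> \<exists>d>0. \<forall>s. 0 \<le> s \<and> s \<le> d \<longrightarrow> mu s \<le> e"
proof -
  assume e: "e > 0"
  have "continuous (at 0 within {0..}) mu" using mu_cont by (simp add: continuous_on_eq_continuous_within)
  then obtain d where d: "d > 0" "\<And>s. s \<in> {0..} \<Longrightarrow> dist s 0 < d \<Longrightarrow> dist (mu s) (mu 0) < e"
    using e unfolding continuous_within_eps_delta by blast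
  show ?thesis
  proof (rule exI[of _ "d/2"], intro conjI allI impI)
    fix s assume "0 \<le> s \<and> s \<le> d/2"
    hence "dist (mu s) (mu 0) < e" using d by (auto simp: dist_real_def)
    thus "mu s \<le> e" using mu_0 by (simp add: dist_real_def)
  qed (use d in auto)
qed

lemma grad_bound: "p \<in> Z \<Longrightarrow> q \<in> Z \<Longrightarrow> norm (gradG p) \<le> norm (gradG q) + mu (norm (p - q))"
  using ii[of p q] norm_triangle_ineq2[of "gradG p" "gradG q"] by auto

lemma frontier_lt: assumes x: "x \<in> frontier Z" shows "\<not> G x < 1"
proof
  assume gx: "G x < 1"
  define M where "M = norm (gradG x) + mu 1 + 1"
  have M: "M > 0" using mu_nonneg[of 1] norm_ge_zero[of "gradG x"] unfolding M_def by linarith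
  define d0 where "d0 = min (1/2) ((1 - G x)/(2*M))"
  have d0: "d0 > 0" using gx M by (simp add: d0_def)
  obtain y where y: "y \<notin> Z" "dist x y < d0" using x d0 unfolding frontier_straddle by blast
  define d where "d = norm (y - x)"
  have d: "d < d0" "d \<ge> 0" using y(2) by (auto simp: d_def dist_norm norm_minus_commute)
  have "G (x + 1 *\<^sub>R (y - x)) \<le> G (x + 0 *\<^sub>R (y - x)) + (M*d) * 1"
  proof (rule barrier[where phi = "\<lambda>s. G (x + s *\<^sub>R (y - x))" and phi' = "\<lambda>t. inner (gradG (x + t *\<^sub>R (y - x))) (y - x)" and T = 1])
    show "\<And>t. ((\<lambda>s. G (x + s *\<^sub>R (y - x))) has_real_derivative inner (gradG (x + t *\<^sub>R (y - x))) (y - x)) (at t)"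
      by (rule line_deriv)
    show "G (x + 0 *\<^sub>R (y - x)) \<le> 1" using gx by simp
    show "G (x + 0 *\<^sub>R (y - x)) + M * d * t < 1" if "0 < t" "t \<le> 1" for t
    proof -
      have "M * d * t \<le> M * d" using that M d by (simp add: mult_left_le)
      also have "M * d \<le> M * d0" using M d by simp
      also have "M * d0 \<le> (1 - G x)/2" using M by (simp add: d0_def min_def field_simps)
      finally show ?thesis using gx by simp
    qed
    show "inner (gradG (x + t *\<^sub>R (y - x))) (y - x) \<le> M * d"
      if "0 \<le> t" "t \<le> 1" "G (x + t *\<^sub>R (y - x)) \<le> 1" for t
    proof -
      let ?p = "x + t *\<^sub>R (y - x)"
      have "norm (?p - x) = t * d" using that by (simp add: d_def)
      also have "\<dots> \<le> 1" using that d unfolding d0_def by (intro mult_le_one) auto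
      finally have pn: "norm (?p - x) \<le> 1" .
      have "norm (gradG ?p) \<le> norm (gradG x) + mu (norm (?p - x))"
        using grad_bound[of ?p x] that gx by auto
      also have "\<dots> \<le> norm (gradG x) + mu 1" using mu_le[OF _ pn] by simp
      finally have "norm (gradG ?p) \<le> M" by (simp add: M_def)
      hence "inner (gradG ?p) (y - x) \<le> M * d"
        using Cauchy_Schwarz_ineq2[of "gradG ?p" "y - x"] d
        by (smt (verit, best) d_def mult_right_mono norm_ge_zero)
      thus ?thesis .
    qed
  qed simp_all
  hence "G y \<le> G x + M * d" by simp
  also have "\<dots> < 1"
  proof -
    have "M * d \<le> M * d0" using M d by simp
    also have "M * d0 \<le> (1 - G x)/2" using M by (simp add: d0_def min_def field_simps)
    finally show ?thesis using gx by simp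
  qed
  finally show False using y(1) by simp
qed

lemma near_level:
  assumes x: "x \<in> frontier Z" and gx: "G x > 1" and e: "e > 0"
  shows "\<exists>w. G w = 1 \<and> norm (w - x) < e"
proof -
  obtain z where z: "z \<in> Z" "dist x z < e" using x e unfolding frontier_straddle by blast
  have "\<exists>t. 0 \<le> t \<and> t \<le> 1 \<and> G (z + t *\<^sub>R (x - z)) = 1"
    by (rule IVT[of "\<lambda>t. G (z + t *\<^sub>R (x - z))"]) (use z gx line_cont in auto)
  then obtain t where t: "0 \<le> t" "t \<le> 1" "G (z + t *\<^sub>R (x - z)) = 1" by blast
  have "z + t *\<^sub>R (x - z) - x = (1 - t) *\<^sub>R (z - x)" by (simp add: algebra_simps)
  hence "norm (z + t *\<^sub>R (x - z) - x) = (1 - t) * norm (z - x)" using t by simp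
  also have "\<dots> \<le> norm (z - x)" using t by (simp add: mult_left_le_one_le)
  also have "\<dots> < e" using z by (simp add: dist_norm norm_minus_commute)
  finally show ?thesis using t by blast
qed

lemma frontier_gt: assumes x: "x \<in> frontier Z" shows "\<not> G x > 1"
proof
  assume gx: "G x > 1"
  obtain eta0 where eta0: "eta0 > 0" "\<And>s. 0 \<le> s \<and> s \<le> eta0 \<longrightarrow> mu s \<le> c/2"
    using mu_small[of "c/2"] c_pos by auto
  define eta where "eta = eta0 / 3"
  have eta: "eta > 0" "\<And>s. 0 \<le> s \<Longrightarrow> s \<le> 3*eta \<Longrightarrow> mu s \<le> c/2"
    using eta0 by (auto simp: eta_def)
  obtain w1 where w1: "G w1 = 1" "norm (w1 - x) < eta" using near_level[OF x gx eta(1)] by blast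
  define g1 where "g1 = gradG w1"
  have g1c: "norm g1 \<ge> c" using i[OF w1(1)] by (simp add: g1_def)
  hence g1pos: "norm g1 > 0" using c_pos by linarith
  define u where "u = - (1 / norm g1) *\<^sub>R g1"
  have un: "norm u = 1" using g1pos by (simp add: u_def)
  have g1u: "inner g1 u = - norm g1" using g1pos
    by (simp add: u_def inner_commute power2_norm_eq_inner[symmetric] power2_eq_square)
  define M where "M = norm g1 + c/2"
  have M: "M > 0" using g1pos c_pos unfolding M_def by linarith
  have near_w1: "norm (gradG p - g1) \<le> c/2" if "p \<in> Z" "norm (p - w1) \<le> 3*eta" for p
  proof -
    have "norm (gradG p - g1) \<le> mu (norm (p - w1))" using ii[of p w1] that w1 by (simp add: g1_def)
    also have "\<dots> \<le> c/2" using eta(2) that by simp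
    finally show ?thesis .
  qed
  have claim: "G (x + t *\<^sub>R u) \<le> 1" if t: "0 < t" "t \<le> eta" for t
  proof -
    define d1 where "d1 = min eta (t * c / (4 * M))"
    have d1: "d1 > 0" using eta t c_pos M by (simp add: d1_def)
    obtain w where w: "G w = 1" "norm (w - x) < d1" using near_level[OF x gx d1] by blast
    define d where "d = norm (x - w)"
    have d: "d < d1" "0 \<le> d" using w by (auto simp: d_def norm_minus_commute)
    define p0 where "p0 = w + t *\<^sub>R u"
    have Md0: "M * d \<le> t * c / 4"
    proof -
      have "d \<le> t * c / (4 * M)" using d unfolding d1_def by simp
      hence "M * d \<le> M * (t * c / (4 * M))" using M by (intro mult_left_mono) auto
      thus ?thesis using M by simp
    qed
    have step1: "G (w + t *\<^sub>R u) \<le> G (w + 0 *\<^sub>R u) + (- c/2) * t"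
    proof (rule barrier[where phi = "\<lambda>s. G (w + s *\<^sub>R u)" and phi' = "\<lambda>s. inner (gradG (w + s *\<^sub>R u)) u" and T = t])
      show "\<And>s. ((\<lambda>s. G (w + s *\<^sub>R u)) has_real_derivative inner (gradG (w + s *\<^sub>R u)) u) (at s)"
        by (rule line_deriv)
      show "inner (gradG (w + s *\<^sub>R u)) u \<le> - c / 2"
        if "0 \<le> s" "s \<le> t" "G (w + s *\<^sub>R u) \<le> 1" for s
      proof -
        let ?p = "w + s *\<^sub>R u"
        have "?p - w1 = s *\<^sub>R u + (w - x) + (x - w1)" by (simp add: algebra_simps)
        hence "norm (?p - w1) \<le> norm (s *\<^sub>R u) + norm (w - x) + norm (x - w1)"
          using norm3 by metis
        moreover have "norm (s *\<^sub>R u) = s" using un that by simp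
        moreover have "norm (w - x) \<le> eta" using w unfolding d1_def by simp
        moreover have "norm (x - w1) \<le> eta" using w1 by (simp add: norm_minus_commute)
        ultimately have "norm (?p - w1) \<le> 3 * eta" using that t by linarith
        hence "norm (gradG ?p - g1) \<le> c/2" using near_w1 that by simp
        hence "inner (gradG ?p - g1) u \<le> c/2" using Cauchy_Schwarz_ineq2[of "gradG ?p - g1" u] un by simp
        thus ?thesis using g1u g1c by (simp add: inner_diff_left)
      qed
    qed (use w t c_pos in auto)
    hence Gp0: "G p0 \<le> 1 - t * c / 2" using w by (simp add: p0_def mult.commute)
    have "G (p0 + 1 *\<^sub>R (x - w)) \<le> G (p0 + 0 *\<^sub>R (x - w)) + (M * d) * 1"
    proof (rule barrier[where phi = "\<lambda>s. G (p0 + s *\<^sub>R (x - w))" and phi' = "\<lambda>s. inner (gradG (p0 + s *\<^sub>R (x - w))) (x - w)" and T = 1])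
      show "\<And>s. ((\<lambda>s. G (p0 + s *\<^sub>R (x - w))) has_real_derivative inner (gradG (p0 + s *\<^sub>R (x - w))) (x - w)) (at s)"
        by (rule line_deriv)
      have Md: "M * d \<le> t * c / 4" by (rule Md0)
      show "G (p0 + 0 *\<^sub>R (x - w)) \<le> 1" using Gp0 mult_pos_pos[OF t(1) c_pos] by simp
      show "G (p0 + 0 *\<^sub>R (x - w)) + M * d * s < 1" if "0 < s" "s \<le> 1" for s
      proof -
        have "M * d * s \<le> M * d" using that M d by (simp add: mult_left_le)
        thus ?thesis using Gp0 Md mult_pos_pos[OF t(1) c_pos] by simp
      qed
      show "inner (gradG (p0 + s *\<^sub>R (x - w))) (x - w) \<le> M * d"
        if "0 \<le> s" "s \<le> 1" "G (p0 + s *\<^sub>R (x - w)) \<le> 1" for s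
      proof -
        let ?p = "p0 + s *\<^sub>R (x - w)"
        have eq: "?p - w1 = (1 - s) *\<^sub>R (w - x) + t *\<^sub>R u + (x - w1)" by (simp add: p0_def algebra_simps)
        have "norm (?p - w1) \<le> norm ((1 - s) *\<^sub>R (w - x)) + norm (t *\<^sub>R u) + norm (x - w1)"
          unfolding eq by (rule norm3)
        also have "\<dots> \<le> d + t + eta"
        proof -
          have "norm ((1 - s) *\<^sub>R (w - x)) = (1 - s) * d" using that by (simp add: d_def norm_minus_commute)
          also have "\<dots> \<le> d" using that d by (simp add: mult_left_le_one_le)
          finally show ?thesis using un t w1 by (simp add: norm_minus_commute)
        qed
        also have "\<dots> \<le> 3 * eta" using d t unfolding d1_def by simp
        finally have "norm (gradG ?p - g1) \<le> c/2" using near_w1 that by simp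
        hence "norm (gradG ?p) \<le> M" unfolding M_def using norm_triangle_ineq2[of "gradG ?p" g1] by linarith
        hence "inner (gradG ?p) (x - w) \<le> M * d"
          using Cauchy_Schwarz_ineq2[of "gradG ?p" "x - w"] d unfolding d_def
          by (smt (verit, best) mult_right_mono norm_ge_zero)
        thus ?thesis .
      qed
    qed simp_all
    moreover have e1: "p0 + 1 *\<^sub>R (x - w) = x + t *\<^sub>R u" by (simp add: p0_def algebra_simps)
    ultimately have "G (x + t *\<^sub>R u) \<le> G p0 + M * d" unfolding e1 by simp
    also have "\<dots> \<le> 1"
      using Md0 Gp0 mult_pos_pos[OF t(1) c_pos] by simp
    finally show ?thesis .
  qed
  have "isCont (\<lambda>s. G (x + s *\<^sub>R u)) 0" by (rule line_cont)
  then obtain del where del: "del > 0" "\<And>s. dist s 0 < del \<Longrightarrow> dist (G (x + s *\<^sub>R u)) (G (x + 0 *\<^sub>R u)) < G x - 1"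
    using gx unfolding continuous_at_eps_delta by (metis diff_gt_0_iff_gt)
  define t where "t = min eta (del/2)"
  have t: "0 < t" "t \<le> eta" "dist t 0 < del" using eta del by (auto simp: t_def dist_real_def)
  from del(2)[OF t(3)] have "G (x + t *\<^sub>R u) > 1" by (simp add: dist_real_def)
  thus False using claim[OF t(1,2)] by simp
qed

lemma frontier_G: "x \<in> frontier Z \<Longrightarrow> G x = 1"
  using frontier_lt frontier_gt by force

lemma first_hit:
  assumes y: "y \<in> frontier Z" and z: "G z \<le> 1" and pos: "inner (gradG y) (z - y) > 0"
  shows "\<exists>s. 0 < s \<and> s \<le> 1 \<and> G (y + s *\<^sub>R (z - y)) = 1 \<and> y + s *\<^sub>R (z - y) \<in> frontier Z
     \<and> inner (gradG (y + s *\<^sub>R (z - y))) (z - y) \<le> 0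
     \<and> (\<forall>t. 0 < t \<and> t < s \<longrightarrow> G (y + t *\<^sub>R (z - y)) > 1)"
proof -
  define v where "v = z - y"
  define psi where "psi = (\<lambda>t. G (y + t *\<^sub>R v))"
  have Dpsi: "\<And>t. (psi has_real_derivative inner (gradG (y + t *\<^sub>R v)) v) (at t)"
    unfolding psi_def by (rule line_deriv)
  have cpsi: "\<And>t. isCont psi t" unfolding psi_def by (rule line_cont)
  have psi0: "psi 0 = 1" using frontier_G[OF y] by (simp add: psi_def)
  have psi1: "psi 1 \<le> 1" using z by (simp add: psi_def v_def)
  have "inner (gradG (y + 0 *\<^sub>R v)) v > 0" using pos by (simp add: v_def)
  from DERIV_pos_inc_right[OF Dpsi this] obtain d where d: "d > 0" "\<And>h. h > 0 \<Longrightarrow> h < d \<Longrightarrow> psi 0 < psi (0 + h)"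
    by blast
  define d0 where "d0 = min (d/2) (1/2)"
  have d0: "0 < d0" "d0 < d" "d0 \<le> 1" using d by (auto simp: d0_def)
  define A where "A = {d0..1} \<inter> {t. psi t \<le> 1}"
  have "continuous_on UNIV psi" using cpsi by (simp add: continuous_at_imp_continuous_on)
  hence "closed {t. psi t \<le> 1}" using closed_Collect_le[of psi "\<lambda>_. 1"] by simp
  hence clA: "closed A" unfolding A_def by (simp add: closed_Int)
  have "1 \<in> A" using psi1 d0 by (simp add: A_def)
  hence neA: "A \<noteq> {}" by auto
  have bdA: "bdd_below A" unfolding A_def by (auto intro: bdd_belowI[of _ d0])
  define s where "s = Inf A"
  have sA: "s \<in> A" unfolding s_def using closed_contains_Inf[OF neA bdA clA] .
  have s: "d0 \<le> s" "s \<le> 1" "psi s \<le> 1" using sA by (auto simp: A_def)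
  have above: "psi t > 1" if "0 < t" "t < s" for t
  proof (cases "t < d")
    case True thus ?thesis using d(2)[of t] that psi0 by simp
  next
    case False
    show ?thesis
    proof (rule ccontr)
      assume "\<not> psi t > 1"
      hence "t \<in> A" using False d0 that s by (auto simp: A_def)
      hence "s \<le> t" unfolding s_def by (rule cInf_lower[OF _ bdA])
      thus False using that by simp
    qed
  qed
  have spos: "s > 0" using s d0 by simp
  have ps1: "psi s = 1"
  proof (rule ccontr)
    assume "psi s \<noteq> 1"
    hence lt: "psi s < 1" using s by simp
    obtain del where del: "del > 0" "\<And>t. dist t s < del \<Longrightarrow> dist (psi t) (psi s) < 1 - psi s"
      using cpsi[of s] lt unfolding continuous_at_eps_delta by (metis diff_gt_0_iff_gt)
    define t where "t = s - min (del/2) (s/2)"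
    have t: "0 < t" "t < s" "dist t s < del" using del spos by (auto simp: t_def dist_real_def)
    have "psi t < 1" using del(2)[OF t(3)] by (simp add: dist_real_def)
    thus False using above[OF t(1,2)] by simp
  qed
  have dneg: "inner (gradG (y + s *\<^sub>R v)) v \<le> 0"
  proof (rule ccontr)
    assume "\<not> ?thesis"
    hence "inner (gradG (y + s *\<^sub>R v)) v > 0" by simp
    from DERIV_pos_inc_left[OF Dpsi this] obtain d' where d': "d' > 0" "\<And>h. h > 0 \<Longrightarrow> h < d' \<Longrightarrow> psi (s - h) < psi s"
      by blast
    define h where "h = min (d'/2) (s/2)"
    have h: "h > 0" "h < d'" "0 < s - h" "s - h < s" using d' spos by (auto simp: h_def)
    have "psi (s - h) < 1" using d'(2)[OF h(1,2)] ps1 by simp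
    thus False using above[OF h(3,4)] by simp
  qed
  have vnz: "v \<noteq> 0" using pos by (auto simp: v_def)
  have fr: "y + s *\<^sub>R v \<in> frontier Z"
    unfolding frontier_straddle
  proof (intro allI impI conjI)
    fix e :: real assume e: "e > 0"
    have "y + s *\<^sub>R v \<in> Z" using ps1 by (simp add: psi_def)
    thus "\<exists>x\<in>Z. dist (y + s *\<^sub>R v) x < e" using e by (intro bexI[of _ "y + s *\<^sub>R v"]) auto
    define t where "t = s - min (s/2) (e / (2 * norm v))"
    have nv: "norm v > 0" using vnz by simp
    have t: "0 < t" "t < s" using spos e nv by (auto simp: t_def)
    have "dist (y + s *\<^sub>R v) (y + t *\<^sub>R v) = (s - t) * norm v"
      using t by (simp add: dist_norm scaleR_diff_left[symmetric])
    also have "\<dots> \<le> (e / (2 * norm v)) * norm v" using nv by (intro mult_right_mono) (auto simp: t_def)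
    also have "\<dots> < e" using nv e by simp
    finally have "dist (y + s *\<^sub>R v) (y + t *\<^sub>R v) < e" .
    moreover have "y + t *\<^sub>R v \<notin> Z" using above[OF t] by (simp add: psi_def)
    ultimately show "\<exists>x. x \<notin> Z \<and> dist (y + s *\<^sub>R v) x < e" by blast
  qed
  show ?thesis
    using spos s ps1 fr dneg above unfolding psi_def v_def by (intro exI[of _ s]) auto
qed

lemma FB:
  assumes y: "y \<in> frontier Z" and z: "G z \<le> 1"
  shows "inner (gradG y) (z - y) \<le> lam * (norm (z - y))\<^sup>2"
proof (cases "inner (gradG y) (z - y) > 0")
  case False
  thus ?thesis using lam_pos by (smt (verit) mult_nonneg_nonneg zero_le_power2)
next
  case True
  then obtain s where s: "0 < s" "s \<le> 1" "G (y + s *\<^sub>R (z - y)) = 1"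
      "inner (gradG (y + s *\<^sub>R (z - y))) (z - y) \<le> 0"
    using first_hit[OF y z] by blast
  define v where "v = z - y"
  define w where "w = y + s *\<^sub>R v"
  have "inner (gradG y - gradG w) (y - w) \<ge> - lam * (norm (y - w))\<^sup>2"
    using iii[OF y, of w] s by (simp add: w_def v_def)
  moreover have "y - w = - s *\<^sub>R v" by (simp add: w_def)
  ultimately have "- s * (inner (gradG y) v - inner (gradG w) v) \<ge> - lam * (s^2 * (norm v)^2)"
    by (simp add: inner_diff_left power_mult_distrib algebra_simps)
  hence "s * (inner (gradG y) v - inner (gradG w) v) \<le> s * (lam * s * (norm v)^2)"
    by (simp add: power2_eq_square algebra_simps)
  hence "inner (gradG y) v - inner (gradG w) v \<le> lam * s * (norm v)^2" using s by simp
  moreover have "inner (gradG w) v \<le> 0" using s by (simp add: w_def v_def)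
  moreover have "lam * s * (norm v)^2 \<le> lam * (norm v)^2" using s lam_pos
    by (simp add: mult_left_le_one_le mult_le_cancel_right1 mult_right_le_one_le)
  ultimately show ?thesis by (simp add: v_def)
qed

end


context lsetup begin

lemma GRAPH:
  assumes x: "x \<in> frontier Z"
    and a: "a = norm (gradG x)" and n: "n = (1/a) *\<^sub>R gradG x"
    and e1: "norm e1 = 1" "inner (gradG x) e1 = 0"
    and del: "del > 0" and m: "m \<le> a/4" and ld: "lam * del \<le> a/4"
    and mu_m: "\<And>r. 0 \<le> r \<Longrightarrow> r \<le> 2*del \<Longrightarrow> mu r \<le> m"
    and s: "0 \<le> s" "s \<le> del/8"
  shows "\<exists>F. - del \<le> F \<and> F < del \<and> G (x + s *\<^sub>R e1 + F *\<^sub>R n) = 1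
            \<and> x + s *\<^sub>R e1 + F *\<^sub>R n \<in> frontier Z
            \<and> (\<forall>t. - del \<le> t \<and> t \<le> del \<and> G (x + s *\<^sub>R e1 + t *\<^sub>R n) \<le> 1 \<longrightarrow> t \<le> F)"
proof -
  have Gx: "G x = 1" using frontier_G[OF x] .
  have ac: "a \<ge> c" using i[OF Gx] a by simp
  have apos: "a > 0" using ac c_pos by simp
  have nn: "norm n = 1" using apos by (simp add: n a)
  have gn: "inner (gradG x) n = a" using apos
    by (simp add: n a power2_norm_eq_inner[symmetric] power2_eq_square)
  have e1n: "inner e1 n = 0" using e1 by (simp add: n inner_commute)
  have m0: "0 \<le> m" using mu_m[of 0] mu_0 del by simp
  have near: "norm (gradG q - gradG x) \<le> m" if "G q \<le> 1" "norm (q - x) \<le> 2*del" for q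
    using ii[of q x] Gx that mu_m[of "norm (q - x)"] by simp
  define P where "P = (\<lambda>t. x + s *\<^sub>R e1 + t *\<^sub>R n)"
  have Pdiff: "P t - x = s *\<^sub>R e1 + t *\<^sub>R n" for t by (simp add: P_def)
  have gP: "inner (gradG x) (P t - x) = a * t" for t
    unfolding Pdiff using e1 gn by (simp add: inner_add_right)
  have nP: "(norm (P t - x))\<^sup>2 = s^2 + t^2" for t
  proof -
    have ee: "inner e1 e1 = 1" using e1 by (simp add: power2_norm_eq_inner[symmetric])
    have nn': "inner n n = 1" using nn by (simp add: power2_norm_eq_inner[symmetric])
    have ne: "inner n e1 = 0" using e1n by (simp add: inner_commute)
    show ?thesis unfolding Pdiff power2_norm_eq_inner
      by (simp add: inner_add_left inner_add_right ee nn' e1n ne power2_eq_square)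
  qed
  have below: "G (x + (del/2) *\<^sub>R (- n)) \<le> G (x + 0 *\<^sub>R (- n)) + (- a/2) * (del/2)"
  proof (rule barrier[where phi = "\<lambda>r. G (x + r *\<^sub>R (- n))" and phi' = "\<lambda>r. inner (gradG (x + r *\<^sub>R (- n))) (- n)" and T = "del/2"])
    show "\<And>t. ((\<lambda>r. G (x + r *\<^sub>R (- n))) has_real_derivative inner (gradG (x + t *\<^sub>R (- n))) (- n)) (at t)"
      by (rule line_deriv)
    show "inner (gradG (x + t *\<^sub>R (- n))) (- n) \<le> - a / 2"
      if "0 \<le> t" "t \<le> del/2" "G (x + t *\<^sub>R (- n)) \<le> 1" for t
    proof -
      have "norm (x + t *\<^sub>R (- n) - x) \<le> 2 * del" using that nn del by simp
      hence "norm (gradG (x + t *\<^sub>R (- n)) - gradG x) \<le> m" using near that by blast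
      hence "inner (gradG (x + t *\<^sub>R (- n)) - gradG x) (- n) \<le> m"
        using Cauchy_Schwarz_ineq2[of "gradG (x + t *\<^sub>R (- n)) - gradG x" "- n"] nn by simp
      thus ?thesis using gn m apos by (simp add: inner_diff_left)
    qed
  qed (use Gx apos del in \<open>auto simp: mult_pos_pos\<close>)
  hence below': "G (x + (- del/2) *\<^sub>R n) \<le> 1 - a * del / 4" using Gx by (simp add: algebra_simps)
  define q0 where "q0 = x + (- del/2) *\<^sub>R n"
  define M where "M = a + m"
  have "G (q0 + 1 *\<^sub>R (s *\<^sub>R e1)) \<le> G (q0 + 0 *\<^sub>R (s *\<^sub>R e1)) + (M * s) * 1"
  proof (rule barrier[where phi = "\<lambda>r. G (q0 + r *\<^sub>R (s *\<^sub>R e1))" and phi' = "\<lambda>r. inner (gradG (q0 + r *\<^sub>R (s *\<^sub>R e1))) (s *\<^sub>R e1)" and T = 1])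
    show "\<And>t. ((\<lambda>r. G (q0 + r *\<^sub>R (s *\<^sub>R e1))) has_real_derivative inner (gradG (q0 + t *\<^sub>R (s *\<^sub>R e1))) (s *\<^sub>R e1)) (at t)"
      by (rule line_deriv)
    have Ms: "M * s \<le> (5/4) * a * (del/8)" using s m apos unfolding M_def
      by (intro mult_mono) auto
    show "G (q0 + 0 *\<^sub>R (s *\<^sub>R e1)) \<le> 1" using below' mult_pos_pos[OF apos del] by (simp add: q0_def)
    show "G (q0 + 0 *\<^sub>R (s *\<^sub>R e1)) + M * s * t < 1" if "0 < t" "t \<le> 1" for t
    proof -
      have "M * s * t \<le> M * s" using that s m0 apos unfolding M_def by (simp add: mult_left_le)
      moreover have "(5/4) * a * (del/8) < a * del / 4" using apos del by simp
      ultimately show ?thesis using below' Ms by (simp add: q0_def)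
    qed
    show "inner (gradG (q0 + t *\<^sub>R (s *\<^sub>R e1))) (s *\<^sub>R e1) \<le> M * s"
      if "0 \<le> t" "t \<le> 1" "G (q0 + t *\<^sub>R (s *\<^sub>R e1)) \<le> 1" for t
    proof -
      let ?q = "q0 + t *\<^sub>R (s *\<^sub>R e1)"
      have eq: "?q - x = (t * s) *\<^sub>R e1 + (- del/2) *\<^sub>R n" by (simp add: q0_def algebra_simps)
      have "norm (?q - x) \<le> norm ((t * s) *\<^sub>R e1) + norm ((- del/2) *\<^sub>R n)" unfolding eq by (rule norm_triangle_ineq)
      also have "\<dots> = t * s + del/2" using e1 nn that s del by simp
      also have "\<dots> \<le> 2 * del"
      proof -
        have "t * s \<le> s" using that s by (simp add: mult_left_le_one_le)
        thus ?thesis using s del by linarith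
      qed
      finally have "norm (gradG ?q - gradG x) \<le> m" using near that by blast
      hence nq: "norm (gradG ?q) \<le> M" unfolding M_def a using norm_triangle_ineq2[of "gradG ?q" "gradG x"] by linarith
      have "inner (gradG ?q) (s *\<^sub>R e1) \<le> norm (gradG ?q) * norm (s *\<^sub>R e1)" by (rule norm_cauchy_schwarz)
      also have "\<dots> \<le> M * norm (s *\<^sub>R e1)" by (rule mult_right_mono[OF nq norm_ge_zero])
      finally show ?thesis using e1 s by simp
    qed
  qed simp_all
  moreover have "q0 + 1 *\<^sub>R (s *\<^sub>R e1) = P (- del/2)" by (simp add: q0_def P_def algebra_simps)
  ultimately have PA: "G (P (- del/2)) \<le> 1"
  proof -
    assume h1: "G (q0 + 1 *\<^sub>R (s *\<^sub>R e1)) \<le> G (q0 + 0 *\<^sub>R (s *\<^sub>R e1)) + M * s * 1"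
       and h2: "q0 + 1 *\<^sub>R (s *\<^sub>R e1) = P (- del / 2)"
    have Ms: "M * s \<le> (5/4) * a * (del/8)" using s m apos unfolding M_def by (intro mult_mono) auto
    have "G (P (- del/2)) \<le> G q0 + M * s" using h1 unfolding h2 by simp
    also have "\<dots> \<le> 1 - a * del / 4 + (5/4) * a * (del/8)" using below' Ms by (simp add: q0_def)
    also have "\<dots> \<le> 1" using apos del by simp
    finally show ?thesis .
  qed
  define A where "A = {- del..del} \<inter> {t. G (P t) \<le> 1}"
  have cont: "continuous_on UNIV (\<lambda>t. G (P t))"
  proof -
    have "\<And>t. isCont (\<lambda>t. G ((x + s *\<^sub>R e1) + t *\<^sub>R n)) t" by (rule line_cont)
    thus ?thesis unfolding P_def by (simp add: continuous_at_imp_continuous_on add.assoc)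
  qed
  have "closed {t. G (P t) \<le> 1}" using closed_Collect_le[OF cont continuous_on_const] by simp
  hence clA: "closed A" unfolding A_def by (simp add: closed_Int)
  have "- del/2 \<in> A" using PA del by (simp add: A_def)
  hence neA: "A \<noteq> {}" by auto
  have bdA: "bdd_above A" unfolding A_def by (auto intro: bdd_aboveI[of _ del])
  define F where "F = Sup A"
  have FA: "F \<in> A" unfolding F_def using closed_contains_Sup[OF neA bdA clA] .
  have upper: "t \<le> F" if "- del \<le> t" "t \<le> del" "G (P t) \<le> 1" for t
    unfolding F_def by (rule cSup_upper[OF _ bdA]) (use that in \<open>simp add: A_def\<close>)
  have F1: "- del \<le> F" "F \<le> del" "G (P F) \<le> 1" using FA by (auto simp: A_def)
  have Flt: "F < del"
  proof (rule ccontr)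
    assume "\<not> F < del"
    hence Fd: "F = del" using F1 by simp
    have "inner (gradG x) (P F - x) \<le> lam * (norm (P F - x))\<^sup>2" by (rule FB[OF x F1(3)])
    hence "a * del \<le> lam * (s^2 + del^2)" using gP nP Fd by simp
    moreover have "lam * s^2 \<le> lam * (del/8)^2" using s lam_pos by (intro mult_left_mono power_mono) auto
    moreover have "lam * del^2 \<le> (a/4) * del"
    proof -
      have "lam * del^2 = (lam * del) * del" by (simp add: power2_eq_square)
      also have "\<dots> \<le> (a/4) * del" using ld del by (intro mult_right_mono) auto
      finally show ?thesis .
    qed
    moreover have "lam * (del/8)^2 \<le> (a/4) * del / 64"
    proof -
      have "lam * (del/8)^2 = (lam * del) * del / 64" by (simp add: power2_eq_square)
      also have "\<dots> \<le> (a/4) * del / 64" using ld del by (intro divide_right_mono mult_right_mono) auto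
      finally show ?thesis .
    qed
    ultimately have "a * del \<le> (a/4) * del + (a/4) * del / 64" by (simp add: distrib_left)
    thus False using apos del by (simp add: field_simps)
  qed
  have fr: "P F \<in> frontier Z"
    unfolding frontier_straddle
  proof (intro allI impI conjI)
    fix e :: real assume e: "e > 0"
    show "\<exists>y\<in>Z. dist (P F) y < e" using F1 e by (intro bexI[of _ "P F"]) auto
    define t where "t = F + min ((del - F)/2) (e/2)"
    have m1: "min ((del - F)/2) (e/2) \<le> (del - F)/2" by (rule min.cobounded1)
    have m2: "min ((del - F)/2) (e/2) > 0" using Flt e by simp
    have t1: "F < t" using m2 unfolding t_def by simp
    have t2: "t \<le> del" using m1 Flt unfolding t_def by (simp add: field_simps)
    have t3: "- del \<le> t" using t1 F1 by simp
    note t = t1 t2 t3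
    have "P t \<notin> Z" using upper[of t] t by auto
    moreover have "dist (P F) (P t) = t - F" using t nn
      by (simp add: P_def dist_norm scaleR_diff_left[symmetric] norm_minus_commute)
    moreover have "t - F < e" using e by (simp add: t_def)
    ultimately show "\<exists>y. y \<notin> Z \<and> dist (P F) y < e" by auto
  qed
  show ?thesis
    using F1 Flt fr frontier_G[OF fr] upper unfolding P_def by (intro exI[of _ F]) auto
qed

end


lemma STEP:
  fixes lam del bmin beta gam Dl F0 F1 :: real
  assumes lp: "lam > 0" and bm: "bmin > 0" and beta: "beta \<ge> bmin + 2*lam*del"
    and f0: "\<bar>F0\<bar> \<le> del" and f1: "\<bar>F1\<bar> \<le> del" and Dl: "Dl \<ge> 0"
    and S1: "Dl * gam + (F1 - F0) * beta \<le> lam * (Dl^2 + (F1 - F0)^2)"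
  shows "F1 - F0 \<le> (Dl * max 0 (- gam) + lam * Dl^2) / bmin"
proof (cases "F1 - F0 \<le> 0")
  case True
  have "0 \<le> (Dl * max 0 (- gam) + lam * Dl^2) / bmin" using Dl lp bm by (intro divide_nonneg_pos add_nonneg_nonneg) auto
  thus ?thesis using True by linarith
next
  case False
  define d where "d = F1 - F0"
  have d: "d > 0" "d \<le> 2*del" using False f0 f1 by (auto simp: d_def)
  have "lam * d^2 \<le> lam * (2*del*d)" using d lp by (intro mult_left_mono) (auto simp: power2_eq_square)
  hence "Dl * gam + d * beta \<le> lam * Dl^2 + 2*lam*del*d" using S1 by (simp add: d_def distrib_left)
  hence "d * (beta - 2*lam*del) \<le> - Dl * gam + lam * Dl^2" by (simp add: algebra_simps)
  moreover have "d * bmin \<le> d * (beta - 2*lam*del)" using d beta by (intro mult_left_mono) auto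
  moreover have "- Dl * gam \<le> Dl * max 0 (- gam)"
  proof -
    have "Dl * (- gam) \<le> Dl * max 0 (- gam)" using Dl by (intro mult_left_mono) auto
    thus ?thesis by simp
  qed
  ultimately have "d * bmin \<le> Dl * max 0 (- gam) + lam * Dl^2" by linarith
  thus ?thesis using bm by (simp add: d_def field_simps)
qed

lemma SLOPE:
  fixes lam a m th del F sig gam beta :: real
  assumes lp: "lam > 0" and ap: "a > 0" and th: "0 \<le> th" "th \<le> 1"
    and m: "m \<le> a * th" and dd: "4 * lam^2 * del^2 \<le> a^2 * th" and ld: "lam * del \<le> a/2"
    and F: "0 \<le> F" "F \<le> del" and sig: "0 < sig" "sig \<le> del"
    and S2: "sig * gam \<ge> - lam * (sig^2 + F^2) + F * (a - beta)"
    and S3: "a * F \<le> lam * (sig^2 + F^2)"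
    and bet: "beta - a \<le> m"
  shows "- gam \<le> lam * (1 + 3*th) * sig"
proof -
  have "lam * F^2 \<le> lam * del * F" using F lp by (simp add: power2_eq_square mult_right_mono mult.assoc)
  hence "F * (a - lam * del) \<le> lam * sig^2" using S3 by (simp add: algebra_simps)
  moreover have "F * (a/2) \<le> F * (a - lam * del)" using F ld by (intro mult_left_mono) auto
  ultimately have Fb: "F \<le> 2 * lam * sig^2 / a" using ap by (simp add: field_simps)
  have "- sig * gam \<le> lam * sig^2 + lam * F^2 + F * m"
  proof -
    have "F * (beta - a) \<le> F * m" using F bet by (intro mult_left_mono) auto
    hence "- F * (a - beta) \<le> F * m" by (simp add: algebra_simps)
    thus ?thesis using S2 by (simp add: algebra_simps)
  qed
  moreover have "lam * F^2 \<le> lam * (2 * lam * sig^2 / a)^2" using F Fb lp by (intro mult_left_mono power_mono) auto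
  moreover have "F * m \<le> (2 * lam * sig^2 / a) * (a * th)"
  proof -
    have m0: "0 \<le> m \<or> m < 0" by auto
    show ?thesis
    proof (cases "m \<ge> 0")
      case True thus ?thesis using F Fb m by (intro mult_mono) auto
    next
      case False
      hence "F * m \<le> 0" using F by (simp add: mult_nonneg_nonpos)
      moreover have "0 \<le> (2 * lam * sig^2 / a) * (a * th)" using lp ap th by simp
      ultimately show ?thesis by linarith
    qed
  qed
  ultimately have A: "- sig * gam \<le> lam * sig^2 + lam * (2 * lam * sig^2 / a)^2 + 2 * lam * sig^2 * th"
    using ap by simp
  have "lam * (2 * lam * sig^2 / a)^2 = lam * sig^2 * (4 * lam^2 * sig^2 / a^2)" using ap
    by (simp add: power2_eq_square field_simps)
  also have "\<dots> \<le> lam * sig^2 * th"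
  proof -
    have "4 * lam^2 * sig^2 \<le> 4 * lam^2 * del^2" using sig by (intro mult_left_mono power_mono) auto
    hence "4 * lam^2 * sig^2 / a^2 \<le> th" using dd ap by (simp add: field_simps)
    thus ?thesis using lp sig by (intro mult_left_mono) auto
  qed
  finally have "- sig * gam \<le> lam * sig^2 * (1 + 3 * th)" using A by (simp add: algebra_simps)
  hence "sig * (- gam) \<le> sig * (lam * (1 + 3*th) * sig)" by (simp add: power2_eq_square algebra_simps)
  thus ?thesis using sig mult_le_cancel_left_pos by blast
qed

lemma IND:
  fixes F gam :: "nat \<Rightarrow> real" and Dl lam bmin L m :: real
  assumes bm: "bmin > 0" and lp: "lam > 0" and L: "L \<ge> 0" and m: "m \<ge> 0" and Dl: "Dl \<ge> 0"
    and F0: "F 0 = 0"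
    and step: "\<And>i. i < N \<Longrightarrow> F (Suc i) - F i \<le> (Dl * max 0 (- gam i) + lam * Dl^2) / bmin"
    and crude: "\<And>i. i < N \<Longrightarrow> - gam i \<le> m"
    and fine: "\<And>i. i < N \<Longrightarrow> F i \<ge> 0 \<Longrightarrow> - gam i \<le> L * (real i * Dl)"
  shows "F N \<le> L / (2 * bmin) * (real N * Dl)^2 + real N * lam * Dl^2 / bmin + (Dl * m + lam * Dl^2) / bmin"
proof -
  define Q where "Q = (\<lambda>i::nat. L / (2 * bmin) * (real i * Dl)^2 + real i * lam * Dl^2 / bmin + (Dl * m + lam * Dl^2) / bmin)"
  have "\<forall>i. i \<le> N \<longrightarrow> F i \<le> Q i"
  proof (intro allI)
    fix i show "i \<le> N \<longrightarrow> F i \<le> Q i"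
    proof (induction i)
      case 0
      have "0 \<le> (Dl * m + lam * Dl^2) / bmin" using bm Dl m lp by (intro divide_nonneg_pos add_nonneg_nonneg) auto
      thus ?case using F0 by (simp add: Q_def)
    next
      case (Suc i)
      show ?case
      proof
        assume si: "Suc i \<le> N"
        hence iN: "i < N" by simp
        have IH: "F i \<le> Q i" using Suc.IH iN by simp
        have st: "F (Suc i) - F i \<le> (Dl * max 0 (- gam i) + lam * Dl^2) / bmin" using step iN .
        have Qmono: "Q i \<le> Q (Suc i)" unfolding Q_def
        proof -
          have "(real i * Dl)^2 \<le> (real (Suc i) * Dl)^2" using Dl by (intro power_mono mult_right_mono) auto
          hence "L / (2 * bmin) * (real i * Dl)^2 \<le> L / (2 * bmin) * (real (Suc i) * Dl)^2"
            using L bm by (intro mult_left_mono) auto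
          moreover have "real i * lam * Dl^2 / bmin \<le> real (Suc i) * lam * Dl^2 / bmin"
            using lp bm by (intro divide_right_mono mult_right_mono) auto
          ultimately show "L / (2 * bmin) * (real i * Dl)\<^sup>2 + real i * lam * Dl\<^sup>2 / bmin + (Dl * m + lam * Dl\<^sup>2) / bmin
              \<le> L / (2 * bmin) * (real (Suc i) * Dl)\<^sup>2 + real (Suc i) * lam * Dl\<^sup>2 / bmin + (Dl * m + lam * Dl\<^sup>2) / bmin"
            by linarith
        qed
        show "F (Suc i) \<le> Q (Suc i)"
        proof (cases "F i \<ge> 0")
          case False
          have "max 0 (- gam i) \<le> m" using crude[OF iN] m by simp
          hence "Dl * max 0 (- gam i) \<le> Dl * m" using Dl by (rule mult_left_mono)
          hence "(Dl * max 0 (- gam i) + lam * Dl^2) / bmin \<le> (Dl * m + lam * Dl^2) / bmin"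
            using bm by (intro divide_right_mono) auto
          moreover have "(Dl * m + lam * Dl^2) / bmin \<le> Q (Suc i)"
          proof -
            have "0 \<le> L / (2 * bmin) * (real (Suc i) * Dl)^2" using L bm by simp
            moreover have "0 \<le> real (Suc i) * lam * Dl^2 / bmin" using lp bm by simp
            ultimately show ?thesis unfolding Q_def by linarith
          qed
          ultimately show ?thesis using st False by linarith
        next
          case True
          have "max 0 (- gam i) \<le> L * (real i * Dl)" using fine[OF iN True] L Dl by simp
          hence "Dl * max 0 (- gam i) \<le> Dl * (L * (real i * Dl))" using Dl by (rule mult_left_mono)
          hence "(Dl * max 0 (- gam i) + lam * Dl^2) / bmin \<le> (Dl * (L * (real i * Dl)) + lam * Dl^2) / bmin"
            using bm by (intro divide_right_mono) auto
          moreover have "Q i + (Dl * (L * (real i * Dl)) + lam * Dl^2) / bmin \<le> Q (Suc i)"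
          proof -
            have "L / (2 * bmin) * (real (Suc i) * Dl)^2 - L / (2 * bmin) * (real i * Dl)^2
                = L * (real i * Dl^2) / bmin + L * Dl^2 / (2 * bmin)"
              using bm by (simp add: field_simps power2_eq_square)
            moreover have "0 \<le> L * Dl^2 / (2 * bmin)" using L bm by simp
            moreover have "Dl * (L * (real i * Dl)) / bmin = L * (real i * Dl^2) / bmin" by (simp add: power2_eq_square algebra_simps)
            moreover have "(Dl * (L * (real i * Dl)) + lam * Dl^2) / bmin = Dl * (L * (real i * Dl)) / bmin + lam * Dl^2 / bmin"
              by (simp add: add_divide_distrib)
            moreover have "real (Suc i) * lam * Dl^2 / bmin = real i * lam * Dl^2 / bmin + lam * Dl^2 / bmin"
              by (simp add: distrib_right add_divide_distrib)
            moreover have "Q i = L / (2 * bmin) * (real i * Dl)^2 + real i * lam * Dl^2 / bmin + (Dl * m + lam * Dl^2) / bmin"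
              by (simp add: Q_def)
            moreover have "Q (Suc i) = L / (2 * bmin) * (real (Suc i) * Dl)^2 + real (Suc i) * lam * Dl^2 / bmin + (Dl * m + lam * Dl^2) / bmin"
              by (simp only: Q_def)
            ultimately show ?thesis by linarith
          qed
          ultimately show ?thesis using st IH by linarith
        qed
      qed
    qed
  qed
  thus ?thesis by (simp add: Q_def)
qed


lemma ARITH1:
  fixes lam a th eta bmin :: real
  assumes lp: "lam > 0" and ap: "a > 0" and th: "th > 0" "th \<le> 1/12" and te: "12*th \<le> eta*a/lam"
    and bm: "bmin \<ge> a*(1 - 3*th)"
  shows "lam*(1+3*th)/(2*bmin) \<le> lam/(2*a) + eta/2"
proof -
  have p: "a*(1 - 3*th) > 0" using ap th by simp
  have bpos: "bmin > 0" using p bm by linarith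
  have "lam*(1+3*th)/(2*bmin) \<le> lam*(1+3*th)/(2*(a*(1 - 3*th)))"
    using p bm lp th ap bpos by (intro divide_left_mono mult_left_mono mult_pos_pos) auto
  also have "\<dots> \<le> lam*(1+12*th)/(2*a)"
  proof -
    have "(1+3*th) \<le> (1+12*th)*(1-3*th)" using th by (simp add: algebra_simps power2_eq_square)
    hence "lam*(1+3*th) \<le> lam*((1+12*th)*(1-3*th))" using lp by (intro mult_left_mono) auto
    thus ?thesis using p ap by (simp add: field_simps)
  qed
  also have "\<dots> = lam/(2*a) + lam*(12*th)/(2*a)" using ap by (simp add: field_simps)
  also have "lam*(12*th)/(2*a) \<le> eta/2"
  proof -
    have "lam*(12*th) \<le> lam*(eta*a/lam)" using te lp by (intro mult_left_mono) auto
    also have "\<dots> = eta * a" using lp by simp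
    finally show ?thesis using ap by (simp add: field_simps)
  qed
  finally show ?thesis by simp
qed

lemma ARITH2:
  fixes N :: nat and tg bmin lam m eta Dl :: real
  assumes N: "N \<ge> 1" and tg: "tg > 0" and bm: "bmin > 0" and lp: "lam > 0" and m: "m \<ge> 0" and eta: "eta > 0"
    and NB: "real N \<ge> 2*(2*lam*tg + m)/(eta*bmin*tg)" and Dl: "Dl = tg / real N"
  shows "real N * lam * Dl^2 / bmin + (Dl * m + lam * Dl^2)/bmin \<le> eta/2 * tg^2"
proof -
  have Np: "real N > 0" using N by simp
  have "lam * Dl^2 \<le> lam * tg^2 / real N"
  proof -
    have "Dl^2 = tg^2 / (real N * real N)" using Dl by (simp add: power2_eq_square)
    also have "\<dots> \<le> tg^2 / real N" using N Np by (intro divide_left_mono) (auto simp: mult_le_cancel_left1)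
    finally have "lam * Dl^2 \<le> lam * (tg^2 / real N)" using lp by (intro mult_left_mono) auto
    thus ?thesis by simp
  qed
  moreover have e1: "real N * lam * Dl^2 = lam * tg^2 / real N" using Dl Np by (simp add: power2_eq_square field_simps)
  moreover have e2: "Dl * m = tg * m / real N" using Dl by simp
  ultimately have "real N * lam * Dl^2 + (Dl * m + lam * Dl^2) \<le> lam * tg^2 / real N + lam * tg^2 / real N + tg * m / real N"
  proof -
    assume h: "lam * Dl^2 \<le> lam * tg^2 / real N"
    define A where "A = lam * tg^2 / real N"
    define B where "B = tg * m / real N"
    define C where "C = lam * Dl^2"
    have "C \<le> A" using h by (simp add: A_def C_def)
    hence "A + (B + C) \<le> A + A + B" by linarith
    thus ?thesis unfolding e1 e2 A_def B_def C_def by simp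
  qed
  also have "\<dots> = (2*lam*tg^2 + tg*m) / real N" by (simp add: add_divide_distrib)
  finally have "(real N * lam * Dl^2 + (Dl * m + lam * Dl^2)) / bmin \<le> ((2*lam*tg^2 + tg*m) / real N) / bmin"
    using bm by (intro divide_right_mono) auto
  hence "real N * lam * Dl^2 / bmin + (Dl * m + lam * Dl^2)/bmin \<le> (2*lam*tg^2 + tg*m) / (real N * bmin)"
    by (simp add: add_divide_distrib)
  also have "\<dots> = tg * ((2*lam*tg + m) / (real N * bmin))" by (simp add: power2_eq_square field_simps)
  also have "(2*lam*tg + m) / (real N * bmin) \<le> eta * tg / 2"
  proof -
    have "2*(2*lam*tg + m) \<le> real N * (eta*bmin*tg)" using NB eta bm tg by (simp add: field_simps)
    thus ?thesis using Np bm eta tg by (simp add: field_simps)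
  qed
  finally show ?thesis using tg by (simp add: power2_eq_square mult_left_mono field_simps)
qed


lemma ortho_norm:
  fixes e1 n :: "'a::real_inner"
  assumes "norm e1 = 1" "norm n = 1" "inner e1 n = 0"
  shows "(norm (al *\<^sub>R e1 + be *\<^sub>R n))\<^sup>2 = al^2 + be^2"
proof -
  have "orthogonal (al *\<^sub>R e1) (be *\<^sub>R n)" using assms by (simp add: orthogonal_def)
  from norm_add_Pythagorean[OF this] show ?thesis using assms by (simp add: power_mult_distrib)
qed

context lsetup begin

lemma LOC:
  assumes x: "x \<in> frontier Z" and eta: "eta > 0"
  shows "\<exists>D0>0. \<forall>w. G w \<le> 1 \<longrightarrow> norm (w - x) < D0 \<longrightarrow>
           inner (gradG x) (w - x) \<le> (lam/2 + eta * norm (gradG x)) * (norm (w - x))\<^sup>2"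
proof -
  have Gx: "G x = 1" using frontier_G[OF x] .
  define g where "g = gradG x"
  define a where "a = norm g"
  have ac: "a \<ge> c" using i[OF Gx] by (simp add: a_def g_def)
  have ap: "a > 0" using ac c_pos by simp
  define n where "n = (1/a) *\<^sub>R g"
  have nn: "norm n = 1" using ap by (simp add: n_def a_def)
  have gn: "g = a *\<^sub>R n" using ap by (simp add: n_def)
  have gnn: "inner g n = a" using nn by (simp add: gn power2_norm_eq_inner[symmetric])
  define th where "th = min (1/12) (eta * a / (12 * lam))"
  have th12: "th \<le> eta * a / (12 * lam)" unfolding th_def by (rule min.cobounded2)
  have th: "th > 0" "th \<le> 1/12" "12 * th \<le> eta * a / lam"
  proof -
    show "th > 0" using eta ap lam_pos by (simp add: th_def)
    show "th \<le> 1/12" unfolding th_def by (rule min.cobounded1)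
    have "12 * th \<le> 12 * (eta * a / (12 * lam))" using th12 by (rule mult_left_mono) simp
    also have "\<dots> = eta * a / lam" using lam_pos by (simp add: field_simps)
    finally show "12 * th \<le> eta * a / lam" .
  qed
  define m where "m = a * th"
  have m0: "m > 0" using ap th by (simp add: m_def)
  obtain d1 where d1: "d1 > 0" "\<And>s. 0 \<le> s \<and> s \<le> d1 \<longrightarrow> mu s \<le> m" using mu_small[OF m0] by auto
  define del where "del = min (d1/2) (a * th / (2 * lam))"
  have del: "del > 0" "2*del \<le> d1" "lam * del \<le> a * th / 2"
    using d1 ap th lam_pos by (auto simp: del_def min_def field_simps)
  have mu_m: "\<And>r. 0 \<le> r \<Longrightarrow> r \<le> 2*del \<Longrightarrow> mu r \<le> m" using d1 del by auto
  have mq: "m \<le> a/4" using th ap by (simp add: m_def)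
  have ld4: "lam * del \<le> a/4"
  proof -
    have "a * th \<le> a * (1/12)" using th ap by (intro mult_left_mono) auto
    thus ?thesis using del(3) ap by linarith
  qed
  have ld2: "lam * del \<le> a/2" using ld4 ap by simp
  have dd: "4*lam^2*del^2 \<le> a^2*th"
  proof -
    have "4*lam^2*del^2 = (2*(lam*del))^2" by (simp add: power2_eq_square)
    also have "\<dots> \<le> (a*th)^2" using del lam_pos by (intro power_mono) auto
    also have "\<dots> = a^2 * (th * th)" by (simp add: power2_eq_square)
    also have "\<dots> \<le> a^2 * th" using th by (intro mult_left_mono) (auto simp: mult_left_le_one_le)
    finally show ?thesis .
  qed
  show ?thesis
  proof (intro exI[of _ "del/8"] conjI allI impI)
    show "del/8 > 0" using del by simp
    fix w assume w: "G w \<le> 1" "norm (w - x) < del/8"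
    define tau where "tau = inner n (w - x)"
    have gw: "inner (gradG x) (w - x) = a * tau" by (simp add: g_def[symmetric] gn tau_def)
    show "inner (gradG x) (w - x) \<le> (lam/2 + eta * norm (gradG x)) * (norm (w - x))\<^sup>2"
    proof (cases "tau \<le> 0")
      case True
      have "a * tau \<le> 0" using True ap by (simp add: mult_nonneg_nonpos)
      moreover have "0 \<le> (lam/2 + eta * norm (gradG x)) * (norm (w - x))\<^sup>2" using lam_pos eta by simp
      ultimately show ?thesis using gw by linarith
    next
      case False
      hence tpos: "tau > 0" by simp
      define r where "r = (w - x) - tau *\<^sub>R n"
      have nn1: "inner n n = 1" using nn by (simp add: power2_norm_eq_inner[symmetric])
      have "inner r n = inner (w - x) n - tau * inner n n" by (simp add: r_def inner_diff_left)
      moreover have "inner (w - x) n = tau" by (simp add: tau_def inner_commute)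
      ultimately have rn: "inner r n = 0" using nn1 by simp
      define ell where "ell = norm r"
      have wx: "w - x = r + tau *\<^sub>R n" by (simp add: r_def)
      have nw2: "(norm (w - x))\<^sup>2 = ell^2 + tau^2"
      proof -
        have "orthogonal r (tau *\<^sub>R n)" using rn by (simp add: orthogonal_def)
        from norm_add_Pythagorean[OF this] show ?thesis using nn by (simp add: wx ell_def)
      qed
      have tau_le: "tau \<le> norm (w - x)"
      proof -
        have "tau^2 \<le> (norm (w - x))^2" using nw2 by simp
        thus ?thesis using tpos by (simp add: power2_le_iff_abs_le)
      qed
      have ell_le: "ell \<le> norm (w - x)"
      proof -
        have "ell^2 \<le> (norm (w - x))^2" using nw2 by simp
        thus ?thesis by (simp add: ell_def power2_le_iff_abs_le)
      qed
      show ?thesis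
      proof (cases "ell = 0")
        case True
        hence "r = 0" by (simp add: ell_def)
        hence wx0: "w - x = tau *\<^sub>R n" using wx by simp
        have "inner (gradG x) (w - x) \<le> lam * (norm (w - x))\<^sup>2" by (rule FB[OF x w(1)])
        hence "a * tau \<le> lam * (norm (w - x))\<^sup>2" using gw by simp
        hence "a * tau \<le> lam * tau^2" using nn wx0 by (simp add: power_mult_distrib)
        hence "a \<le> lam * tau" using tpos by (simp add: power2_eq_square)
        also have "\<dots> \<le> lam * del"
        proof -
          have "tau \<le> del" using tau_le w(2) norm_ge_zero[of "w - x"] by linarith
          thus ?thesis using lam_pos by (intro mult_left_mono) auto
        qed
        finally show ?thesis using ld4 ap by simp
      next
        case False
        hence ellpos: "ell > 0" by (simp add: ell_def)
        define e1 where "e1 = (1/ell) *\<^sub>R r"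
        have e1n: "norm e1 = 1" using ellpos by (simp add: e1_def ell_def)
        have e1nn: "inner e1 n = 0" using rn by (simp add: e1_def)
        have ge1: "inner g e1 = 0" using e1nn by (simp add: gn inner_commute)
        have re1: "r = ell *\<^sub>R e1" using ellpos by (simp add: e1_def)
        have ellD: "ell \<le> del/8" using ell_le w by simp
        have GR: "\<forall>s\<in>{0..del/8}. \<exists>F. - del \<le> F \<and> F < del \<and> G (x + s *\<^sub>R e1 + F *\<^sub>R n) = 1
            \<and> x + s *\<^sub>R e1 + F *\<^sub>R n \<in> frontier Z
            \<and> (\<forall>t. - del \<le> t \<and> t \<le> del \<and> G (x + s *\<^sub>R e1 + t *\<^sub>R n) \<le> 1 \<longrightarrow> t \<le> F)"
        proof
          fix s assume s: "s \<in> {0..del/8}"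
          show "\<exists>F. - del \<le> F \<and> F < del \<and> G (x + s *\<^sub>R e1 + F *\<^sub>R n) = 1
            \<and> x + s *\<^sub>R e1 + F *\<^sub>R n \<in> frontier Z
            \<and> (\<forall>t. - del \<le> t \<and> t \<le> del \<and> G (x + s *\<^sub>R e1 + t *\<^sub>R n) \<le> 1 \<longrightarrow> t \<le> F)"
            by (rule GRAPH[OF x _ _ e1n _ del(1) mq ld4 mu_m]) (use s ge1 in \<open>auto simp: a_def n_def g_def\<close>)
        qed
        then obtain Fn where Fn: "\<forall>s\<in>{0..del/8}. - del \<le> Fn s \<and> Fn s < del \<and> G (x + s *\<^sub>R e1 + Fn s *\<^sub>R n) = 1
            \<and> x + s *\<^sub>R e1 + Fn s *\<^sub>R n \<in> frontier Z
            \<and> (\<forall>t. - del \<le> t \<and> t \<le> del \<and> G (x + s *\<^sub>R e1 + t *\<^sub>R n) \<le> 1 \<longrightarrow> t \<le> Fn s)"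
          by (rule bchoice[THEN exE]) blast
        define bmin where "bmin = a - m - 2*lam*del"
        have bmin_ge: "bmin \<ge> a*(1 - 3*th)"
        proof -
          have "2*lam*del \<le> a*th" using del(3) by simp
          moreover have "a*th \<ge> 0" using ap th by simp
          moreover have "a*(1 - 3*th) = a - 3*(a*th)" by (simp add: algebra_simps)
          ultimately show ?thesis unfolding bmin_def m_def by linarith
        qed
        have "a*(1 - 3*th) > 0" using th ap by simp
        hence bpos: "bmin > 0" using bmin_ge by linarith
        define N where "N = nat \<lceil>2*(2*lam*ell + m)/(eta*bmin*ell)\<rceil> + 1"
        have N1: "N \<ge> 1" by (simp add: N_def)
        have NB: "real N \<ge> 2*(2*lam*ell + m)/(eta*bmin*ell)"
        proof -
          have "2*(2*lam*ell + m)/(eta*bmin*ell) \<le> real (nat \<lceil>2*(2*lam*ell + m)/(eta*bmin*ell)\<rceil>)"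
            by (rule real_nat_ceiling_ge)
          thus ?thesis by (simp add: N_def)
        qed
        have Np: "real N > 0" using N1 by simp
        define Dl where "Dl = ell / real N"
        have Dl0: "Dl \<ge> 0" using ellpos Np by (simp add: Dl_def)
        define F where "F = (\<lambda>i::nat. Fn (real i * Dl))"
        define p where "p = (\<lambda>i::nat. x + (real i * Dl) *\<^sub>R e1 + F i *\<^sub>R n)"
        define gam where "gam = (\<lambda>i. inner (gradG (p i)) e1)"
        define bet where "bet = (\<lambda>i. inner (gradG (p i)) n)"
        have sr: "0 \<le> real i * Dl \<and> real i * Dl \<le> ell" if "i \<le> N" for i
        proof -
          have "real i * Dl = ell * (real i / real N)" by (simp add: Dl_def)
          also have "\<dots> \<le> ell * 1" using that ellpos Np by (intro mult_left_mono) auto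
          finally show ?thesis using Dl0 by simp
        qed
        have PP: "- del \<le> F i \<and> F i < del \<and> G (p i) = 1 \<and> p i \<in> frontier Z
            \<and> (\<forall>t. - del \<le> t \<and> t \<le> del \<and> G (x + (real i * Dl) *\<^sub>R e1 + t *\<^sub>R n) \<le> 1 \<longrightarrow> t \<le> F i)"
          if "i \<le> N" for i
        proof -
          have "real i * Dl \<in> {0..del/8}" using sr[OF that] ellD by auto
          thus ?thesis using Fn unfolding F_def p_def by blast
        qed
        have pdiff: "p i - x = (real i * Dl) *\<^sub>R e1 + F i *\<^sub>R n" for i by (simp add: p_def)
        have near: "norm (gradG (p i) - g) \<le> m" if "i \<le> N" for i
        proof -
          have "norm (p i - x) \<le> norm ((real i * Dl) *\<^sub>R e1) + norm (F i *\<^sub>R n)"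
            unfolding pdiff by (rule norm_triangle_ineq)
          also have "\<dots> = real i * Dl + \<bar>F i\<bar>" using e1n nn sr[OF that] by simp
          also have "\<dots> \<le> 2 * del" using sr[OF that] ellD PP[OF that] del by auto
          finally have "norm (p i - x) \<le> 2 * del" .
          moreover have "norm (gradG (p i) - g) \<le> mu (norm (p i - x))"
            using ii[of "p i" x] PP[OF that] Gx by (simp add: g_def)
          ultimately show ?thesis using mu_m[of "norm (p i - x)"] by simp
        qed
        have gamb: "\<bar>gam i\<bar> \<le> m" if "i \<le> N" for i
        proof -
          have "gam i = inner (gradG (p i) - g) e1" using ge1 by (simp add: gam_def inner_diff_left)
          hence "\<bar>gam i\<bar> \<le> norm (gradG (p i) - g) * norm e1" by (simp add: Cauchy_Schwarz_ineq2)
          thus ?thesis using near[OF that] e1n by simp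
        qed
        have betb: "\<bar>bet i - a\<bar> \<le> m" if "i \<le> N" for i
        proof -
          have "bet i - a = inner (gradG (p i) - g) n" using gnn by (simp add: bet_def inner_diff_left)
          hence "\<bar>bet i - a\<bar> \<le> norm (gradG (p i) - g) * norm n" by (simp add: Cauchy_Schwarz_ineq2)
          thus ?thesis using near[OF that] nn by simp
        qed
        have F0: "F 0 = 0"
        proof -
          have P0: "p 0 = x + F 0 *\<^sub>R n" by (simp add: p_def)
          have "0 \<le> F 0" using PP[of 0] Gx del by auto
          moreover have "\<not> F 0 > 0"
          proof
            assume F0p: "F 0 > 0"
            have "inner (gradG x) (p 0 - x) \<le> lam * (norm (p 0 - x))\<^sup>2" using FB[OF x] PP[of 0] by simp
            hence "a * F 0 \<le> lam * (F 0)^2" using nn gnn by (simp add: P0 g_def[symmetric] power_mult_distrib mult.commute)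
            hence "a \<le> lam * F 0" using F0p by (simp add: power2_eq_square)
            also have "\<dots> \<le> lam * del" using PP[of 0] lam_pos by (intro mult_left_mono) auto
            finally show False using ld4 ap by simp
          qed
          ultimately show ?thesis by simp
        qed
        have p0: "p 0 = x" using F0 by (simp add: p_def)
        have stepF: "F (Suc i) - F i \<le> (Dl * max 0 (- gam i) + lam * Dl^2) / bmin" if "i < N" for i
        proof (rule STEP[OF lam_pos bpos])
          show "bet i \<ge> bmin + 2*lam*del" using betb[of i] that by (simp add: bmin_def)
          show "\<bar>F i\<bar> \<le> del" "\<bar>F (Suc i)\<bar> \<le> del" using PP[of i] PP[of "Suc i"] that by auto
          show "Dl \<ge> 0" by (rule Dl0)
          have d: "p (Suc i) - p i = Dl *\<^sub>R e1 + (F (Suc i) - F i) *\<^sub>R n"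
            by (simp add: p_def algebra_simps)
          have "inner (gradG (p i)) (p (Suc i) - p i) \<le> lam * (norm (p (Suc i) - p i))\<^sup>2"
            using FB[of "p i" "p (Suc i)"] PP[of i] PP[of "Suc i"] that by simp
          thus "Dl * gam i + (F (Suc i) - F i) * bet i \<le> lam * (Dl^2 + (F (Suc i) - F i)^2)"
            unfolding d ortho_norm[OF e1n nn e1nn] by (simp add: inner_add_right gam_def bet_def mult.commute)
        qed
        have S2: "(real i * Dl) * gam i \<ge> - lam * ((real i * Dl)^2 + (F i)^2) + F i * (a - bet i)" if "i \<le> N" for i
        proof -
          have "inner (g - gradG (p i)) (x - p i) \<ge> - lam * (norm (x - p i))\<^sup>2"
            using iii[OF x, of "p i"] PP[OF that] by (simp add: g_def)
          moreover have "x - p i = - ((real i * Dl) *\<^sub>R e1 + F i *\<^sub>R n)" using pdiff[of i] by (simp add: algebra_simps)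
          moreover have "(norm ((real i * Dl) *\<^sub>R e1 + F i *\<^sub>R n))\<^sup>2 = (real i * Dl)^2 + (F i)^2"
            by (rule ortho_norm[OF e1n nn e1nn])
          ultimately have "inner (g - gradG (p i)) (- ((real i * Dl) *\<^sub>R e1 + F i *\<^sub>R n)) \<ge> - lam * ((real i * Dl)^2 + (F i)^2)"
            by (metis norm_minus_cancel)
          thus ?thesis using ge1 gnn by (simp add: inner_diff_left inner_add_right gam_def bet_def algebra_simps)
        qed
        have S3: "a * F i \<le> lam * ((real i * Dl)^2 + (F i)^2)" if "i \<le> N" for i
        proof -
          have "inner g (p i - x) \<le> lam * (norm (p i - x))\<^sup>2" using FB[OF x, of "p i"] PP[OF that] by (simp add: g_def)
          thus ?thesis unfolding pdiff ortho_norm[OF e1n nn e1nn] using ge1 gnn by (simp add: inner_add_right mult.commute)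
        qed
        have fine: "- gam i \<le> lam * (1 + 3*th) * (real i * Dl)" if "i < N" "F i \<ge> 0" for i
        proof (cases "i = 0")
          case True
          have "gam i = 0" using True p0 ge1 by (simp add: gam_def g_def)
          thus ?thesis using True by simp
        next
          case False
          have ipos: "real i * Dl > 0" using False ellpos Np by (simp add: Dl_def)
          show ?thesis
          proof (rule SLOPE[OF lam_pos ap _ _ _ dd ld2])
            show "0 \<le> th" "th \<le> 1" using th by auto
            show "m \<le> a * th" by (simp add: m_def)
            show "0 \<le> F i" "F i \<le> del" using that PP[of i] by auto
            show "0 < real i * Dl" by (rule ipos)
            show "real i * Dl \<le> del" using sr[of i] that ellD del by auto
            show "real i * Dl * gam i \<ge> - lam * ((real i * Dl)^2 + (F i)^2) + F i * (a - bet i)" using S2[of i] that by simp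
            show "a * F i \<le> lam * ((real i * Dl)^2 + (F i)^2)" using S3[of i] that by simp
            show "bet i - a \<le> m" using betb[of i] that by simp
          qed
        qed
        have L0: "lam * (1 + 3*th) \<ge> 0" using lam_pos th by simp
        have FN: "F N \<le> lam * (1 + 3*th) / (2 * bmin) * (real N * Dl)^2 + real N * lam * Dl^2 / bmin + (Dl * m + lam * Dl^2) / bmin"
          by (rule IND[OF bpos lam_pos L0 _ Dl0 F0 stepF]) (use m0 gamb fine in \<open>auto simp: abs_le_iff\<close>)
        have NDl: "real N * Dl = ell" using Np by (simp add: Dl_def)
        have A1: "lam * (1 + 3*th) / (2 * bmin) \<le> lam/(2*a) + eta/2"
          by (rule ARITH1[OF lam_pos ap th bmin_ge])
        have A2: "real N * lam * Dl^2 / bmin + (Dl * m + lam * Dl^2) / bmin \<le> eta/2 * ell^2"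
          by (rule ARITH2[OF N1 ellpos bpos lam_pos _ eta NB Dl_def]) (use m0 in simp)
        have "F N \<le> (lam/(2*a) + eta/2) * ell^2 + eta/2 * ell^2"
        proof -
          have "lam * (1 + 3*th) / (2 * bmin) * ell^2 \<le> (lam/(2*a) + eta/2) * ell^2"
            using A1 by (intro mult_right_mono) auto
          moreover have "F N \<le> lam * (1 + 3*th) / (2 * bmin) * ell^2 + real N * lam * Dl^2 / bmin + (Dl * m + lam * Dl^2) / bmin"
            using FN unfolding NDl .
          ultimately show ?thesis using A2 by linarith
        qed
        hence FNb: "F N \<le> (lam/(2*a) + eta) * ell^2" by (simp add: algebra_simps)
        have "tau \<le> F N"
        proof -
          have "x + (real N * Dl) *\<^sub>R e1 + tau *\<^sub>R n = w" using NDl re1 wx by (simp add: algebra_simps)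
          moreover have "- del \<le> tau" "tau \<le> del" using tpos tau_le w del by auto
          moreover have "\<forall>t. - del \<le> t \<and> t \<le> del \<and> G (x + (real N * Dl) *\<^sub>R e1 + t *\<^sub>R n) \<le> 1 \<longrightarrow> t \<le> F N"
            using PP[of N] by simp
          ultimately show ?thesis using w(1) by metis
        qed
        hence "a * tau \<le> a * ((lam/(2*a) + eta) * ell^2)" using FNb ap by (intro mult_left_mono) auto
        also have "\<dots> = (lam/2 + eta * a) * ell^2" using ap by (simp add: field_simps)
        also have "\<dots> \<le> (lam/2 + eta * a) * (norm (w - x))\<^sup>2" using nw2 lam_pos eta ap
          by (intro mult_left_mono) auto
        finally show ?thesis using gw by (simp add: a_def g_def)
      qed
    qed
  qed
qed

end


context lsetup begin

lemma FEAS: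
  assumes w: "G w \<le> 1" and u: "norm u = 1" and gu: "inner (gradG w) u \<le> - gm" and gm: "gm > 0"
    and t1: "\<And>s. 0 \<le> s \<Longrightarrow> s \<le> t1 \<Longrightarrow> mu s \<le> gm/2"
    and s: "0 \<le> s" "s \<le> t1"
  shows "G (w + s *\<^sub>R u) \<le> 1"
proof -
  have "G (w + s *\<^sub>R u) \<le> G (w + 0 *\<^sub>R u) + (- gm/2) * s"
  proof (rule barrier[where phi = "\<lambda>s. G (w + s *\<^sub>R u)" and phi' = "\<lambda>s. inner (gradG (w + s *\<^sub>R u)) u" and T = t1])
    show "\<And>t. ((\<lambda>s. G (w + s *\<^sub>R u)) has_real_derivative inner (gradG (w + t *\<^sub>R u)) u) (at t)"
      by (rule line_deriv)
    show "inner (gradG (w + t *\<^sub>R u)) u \<le> - gm / 2" if "0 \<le> t" "t \<le> t1" "G (w + t *\<^sub>R u) \<le> 1" for t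
    proof -
      have "norm (gradG (w + t *\<^sub>R u) - gradG w) \<le> mu (norm (w + t *\<^sub>R u - w))"
        using ii[of "w + t *\<^sub>R u" w] that w by simp
      also have "norm (w + t *\<^sub>R u - w) = t" using u that by simp
      also have "mu t \<le> gm/2" using t1 that by simp
      finally have "inner (gradG (w + t *\<^sub>R u) - gradG w) u \<le> gm/2"
        using Cauchy_Schwarz_ineq2[of "gradG (w + t *\<^sub>R u) - gradG w" u] u by simp
      thus ?thesis using gu by (simp add: inner_diff_left)
    qed
    show "G (w + 0 *\<^sub>R u) + (- gm/2) * t < 1" if "0 < t" "t \<le> t1" for t
      using w mult_pos_pos[OF gm that(1)] by simp
  qed (use w s in auto)
  hence "G (w + s *\<^sub>R u) \<le> G w + (- gm/2) * s" by simp
  moreover have "(- gm/2) * s \<le> 0" using gm s by (intro mult_nonpos_nonneg) auto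
  ultimately show ?thesis using w by linarith
qed

lemma TANG:
  assumes wf: "w \<in> frontier Z" and rho: "rho > 0"
    and ball: "\<And>y. G y \<le> 1 \<Longrightarrow> (norm (y - q))\<^sup>2 \<ge> rho^2"
    and k0: "k0 > 0" and t1p: "t1 > 0" and t1: "\<And>s. 0 \<le> s \<Longrightarrow> s \<le> t1 \<Longrightarrow> mu s \<le> c * k0 / 4"
    and small: "(norm (w - q))\<^sup>2 - rho^2 < min t1 (k0 * norm (w - q) / 2) * k0 * norm (w - q) / 2"
  shows "norm ((1 / norm (w - q)) *\<^sub>R (w - q) + (1 / norm (gradG w)) *\<^sub>R gradG w) \<le> k0"
proof (rule ccontr)
  assume neg: "\<not> ?thesis"
  have Gw: "G w = 1" using frontier_G[OF wf] .
  define R where "R = norm (w - q)"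
  have R: "R \<ge> rho" using ball[of w] Gw rho by (simp add: R_def power2_le_iff_abs_le)
  have Rp: "R > 0" using R rho by simp
  define b where "b = norm (gradG w)"
  have bc: "b \<ge> c" using i[OF Gw] by (simp add: b_def)
  have bp: "b > 0" using bc c_pos by simp
  define e where "e = (1 / R) *\<^sub>R (w - q)"
  define nw where "nw = (1 / b) *\<^sub>R gradG w"
  have en: "norm e = 1" using Rp by (simp add: e_def R_def)
  have nwn: "norm nw = 1" using bp by (simp add: nw_def b_def)
  define v where "v = e + nw"
  define th where "th = norm v"
  have thk: "th > k0" using neg by (simp add: th_def v_def e_def nw_def R_def b_def)
  have thp: "th > 0" using thk k0 by simp
  have ee: "inner e e = 1" using en by (simp add: power2_norm_eq_inner[symmetric])
  have nn: "inner nw nw = 1" using nwn by (simp add: power2_norm_eq_inner[symmetric])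
  have th2: "th^2 = 2 + 2 * inner e nw"
    unfolding th_def v_def power2_norm_eq_inner by (simp add: inner_add_left inner_add_right ee nn inner_commute)
  have ev: "inner e v = th^2 / 2" using th2 by (simp add: v_def inner_add_right ee)
  have nv: "inner nw v = th^2 / 2" using th2 by (simp add: v_def inner_add_right nn inner_commute)
  define u where "u = (- 1 / th) *\<^sub>R v"
  have un: "norm u = 1" using thp by (simp add: u_def th_def)
  have eu: "inner e u = - th / 2" using ev thp by (simp add: u_def power2_eq_square)
  have nu: "inner nw u = - th / 2" using nv thp by (simp add: u_def power2_eq_square)
  have gwn: "gradG w = b *\<^sub>R nw" using bp by (simp add: nw_def)
  have gu: "inner (gradG w) u = - (b * th / 2)" using nu by (simp add: gwn)
  have wq: "w - q = R *\<^sub>R e" using Rp by (simp add: e_def)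
  define t where "t = min t1 (th * R / 2)"
  have t0: "t > 0" using t1p thp Rp by (simp add: t_def)
  have tle: "t \<le> th * R / 2" "t \<le> t1" by (simp_all add: t_def)
  have "G (w + t *\<^sub>R u) \<le> 1"
  proof (rule FEAS[OF _ un _ _ _ _ tle(2)])
    show "G w \<le> 1" using Gw by simp
    show "inner (gradG w) u \<le> - (b * th / 2)" using gu by simp
    show "0 < b * th / 2" using bp thp by simp
    show "mu s \<le> b * th / 2 / 2" if "0 \<le> s" "s \<le> t1" for s
    proof -
      have "c * k0 \<le> b * th" using bc thk c_pos k0 by (intro mult_mono) auto
      thus ?thesis using t1[OF that] by simp
    qed
    show "0 \<le> t" using t0 by simp
  qed
  hence "(norm (w + t *\<^sub>R u - q))\<^sup>2 \<ge> rho^2" using ball by blast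
  moreover have "(norm (w + t *\<^sub>R u - q))\<^sup>2 = R^2 - t * th * R + t^2"
  proof -
    have eq: "w + t *\<^sub>R u - q = R *\<^sub>R e + t *\<^sub>R u" using wq by (simp add: algebra_simps)
    have "(norm (w + t *\<^sub>R u - q))\<^sup>2 = inner (R *\<^sub>R e + t *\<^sub>R u) (R *\<^sub>R e + t *\<^sub>R u)"
      unfolding eq by (simp add: power2_norm_eq_inner)
    also have "\<dots> = R * R * inner e e + R * t * inner e u + R * t * inner u e + t * t * inner u u"
      by (simp add: inner_add_left inner_add_right distrib_left mult.assoc mult.left_commute)
    also have "inner u e = inner e u" by (rule inner_commute)
    also have "inner u u = 1" using un by (simp add: power2_norm_eq_inner[symmetric])
    finally have "(norm (w + t *\<^sub>R u - q))\<^sup>2 = R * R + 2 * (R * t * (- th / 2)) + t * t" using ee eu by simp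
    thus ?thesis by (simp add: power2_eq_square algebra_simps)
  qed
  moreover have "t^2 \<le> t * (th * R / 2)" using tle t0 by (simp add: power2_eq_square mult_left_mono)
  moreover have "t * (th * R / 2) = t * th * R / 2" by simp
  ultimately have A: "t * th * R / 2 \<le> R^2 - rho^2" by linarith
  have "k0 * R / 2 \<le> th * R / 2" using thk Rp by (intro divide_right_mono mult_right_mono) auto
  hence "min t1 (k0 * R / 2) \<le> t" unfolding t_def by (intro min.mono) auto
  hence "min t1 (k0 * R / 2) * k0 * R / 2 \<le> t * th * R / 2"
  proof -
    assume h: "min t1 (k0 * R / 2) \<le> t"
    have mp: "min t1 (k0 * R / 2) \<ge> 0" using t1p k0 Rp by simp
    have "min t1 (k0 * R / 2) * k0 \<le> t * th" using h thk mp k0 by (intro mult_mono) auto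
    thus ?thesis using Rp by (simp add: divide_right_mono mult_right_mono)
  qed
  with A small show False by (simp add: R_def)
qed

end


lemma T1_bound:
  fixes T1 R rho S eps D :: real
  assumes Sp: "S > 0" and e0: "eps \<ge> 0" and eS: "eps \<le> S/27" and rho: "rho = 1/(2*S)"
    and Rp: "R > 0" and RD: "R \<le> rho + eps * D^2" and Dp: "D > 0" and D2: "D \<le> 2/S"
    and g3: "T1 * R \<ge> rho * (S - eps) * D^2"
  shows "T1 \<ge> (S - 9*eps) * D^2"
proof -
  have rp: "rho > 0" using Sp rho by simp
  have "eps * D^2 \<le> eps * (2/S)^2" using e0 Dp D2 by (intro mult_left_mono power_mono) auto
  also have "\<dots> = rho * (8*eps/S)" using Sp rho by (simp add: power2_eq_square field_simps)
  finally have "R \<le> rho * (1 + 8*eps/S)" using RD by (simp add: distrib_left)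
  hence "T1 * (rho * (1 + 8*eps/S)) \<ge> rho * (S - eps) * D^2 \<or> T1 < 0"
    using g3 by (smt (verit) mult_left_mono)
  moreover have "T1 \<ge> 0"
  proof -
    have "rho * (S - eps) * D^2 \<ge> 0" using rp eS Sp by simp
    hence "T1 * R \<ge> 0" using g3 by linarith
    thus ?thesis using Rp by (simp add: zero_le_mult_iff)
  qed
  ultimately have A: "T1 * (1 + 8*eps/S) \<ge> (S - eps) * D^2" using rp
    by (smt (verit) mult.assoc mult.commute mult_le_cancel_left_pos)
  have "(S - 9*eps) * D^2 * (1 + 8*eps/S) \<le> (S - eps) * D^2"
  proof -
    have "(S - 9*eps) * (1 + 8*eps/S) = S - eps - 72*eps^2/S" using Sp by (simp add: field_simps power2_eq_square)
    also have "\<dots> \<le> S - eps" using Sp e0 by simp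
    finally show ?thesis using Dp by (simp add: mult.commute mult.left_commute mult_left_mono)
  qed
  hence "(S - 9*eps) * D^2 * (1 + 8*eps/S) \<le> T1 * (1 + 8*eps/S)" using A by linarith
  moreover have "1 + 8*eps/S > 0" using e0 Sp by (simp add: add_pos_nonneg)
  ultimately show ?thesis by simp
qed

lemma FINAL_ARITH:
  fixes a b c lam S eps sig D T1 T2 nwx :: real
  assumes cp: "c > 0" and ac: "a \<ge> c" and bc: "b \<ge> c" and Sp: "S > 0"
    and e0: "eps \<ge> 0" and eS: "eps \<le> S/27" and s0: "sig \<ge> 0" and sS: "sig \<le> S/3"
    and dl: "(a + 9*c) * eps \<le> ((a+c)*S - lam)/3" and cs: "c * sig \<le> ((a+c)*S - lam)/3"
    and dpos: "(a+c)*S - lam > 0"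
    and g1: "a*nwx + b*(T2 + T1) \<le> lam*D^2"
    and g2: "T2 \<ge> - sig * D^2"
    and T1: "T1 \<ge> (S - 9*eps) * D^2"
    and g5: "nwx > (S - eps) * D^2" and Dp: "D > 0"
  shows False
proof -
  have D2p: "D^2 > 0" using Dp by simp
  have "T2 + T1 \<ge> (S - 9*eps - sig) * D^2" using g2 T1 by (simp add: algebra_simps)
  moreover have "S - 9*eps - sig \<ge> 0" using eS sS Sp by simp
  ultimately have "b*(T2 + T1) \<ge> c * ((S - 9*eps - sig) * D^2)"
    using bc cp D2p by (intro mult_mono) auto
  moreover have "a*nwx \<ge> a * ((S - eps) * D^2)" using g5 ac cp by (intro mult_left_mono) auto
  ultimately have "(a * (S - eps) + c * (S - 9*eps - sig)) * D^2 \<le> lam * D^2" using g1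
    by (simp add: algebra_simps)
  hence "a * (S - eps) + c * (S - 9*eps - sig) \<le> lam" using D2p by simp
  thus False using dl cs dpos by (simp add: algebra_simps)
qed


lemma norm_diff_scale:
  fixes u v :: "'a::real_inner"
  shows "(norm (u - r *\<^sub>R v))\<^sup>2 = (norm u)\<^sup>2 - 2 * r * inner v u + r^2 * (norm v)\<^sup>2"
proof -
  have "(norm (u - r *\<^sub>R v))\<^sup>2 = inner (u - r *\<^sub>R v) (u - r *\<^sub>R v)" by (simp add: power2_norm_eq_inner)
  also have "\<dots> = inner u u - r * inner u v - r * inner v u + r * r * inner v v"
    by (simp add: inner_diff_left inner_diff_right algebra_simps)
  also have "inner u v = inner v u" by (rule inner_commute)
  finally have A: "(norm (u - r *\<^sub>R v))\<^sup>2 = inner u u - r * inner v u - r * inner v u + r * r * inner v v" .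
  have B: "(norm u)\<^sup>2 = inner u u" "(norm v)\<^sup>2 = inner v v" by (simp_all add: power2_norm_eq_inner)
  show ?thesis unfolding A B by (simp add: power2_eq_square algebra_simps)
qed

context lsetup begin

lemma MAIN:
  assumes x: "x \<in> frontier Z" and z: "G z \<le> 1"
  shows "inner (gradG x) (z - x) \<le> norm (gradG x) * lam / (2*c) * (norm (z - x))\<^sup>2"
proof (rule ccontr)
  assume neg: "\<not> ?thesis"
  have Gx: "G x = 1" using frontier_G[OF x] .
  define g where "g = gradG x"
  define a where "a = norm g"
  have ac: "a \<ge> c" using i[OF Gx] by (simp add: a_def g_def)
  have ap: "a > 0" using ac c_pos by simp
  define n where "n = (1/a) *\<^sub>R g"
  have nn: "norm n = 1" using ap by (simp add: n_def a_def)
  have gn: "g = a *\<^sub>R n" using ap by (simp add: n_def)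
  have ign: "\<And>y. inner g y = a * inner n y" by (simp add: gn)
  define h where "h = (\<lambda>y. inner n (y - x) / (norm (y - x))\<^sup>2)"
  define H where "H = h ` {y. G y \<le> 1 \<and> y \<noteq> x}"
  have fb: "inner n (y - x) \<le> (lam/a) * (norm (y - x))\<^sup>2" if "G y \<le> 1" for y
  proof -
    have "a * inner n (y - x) \<le> lam * (norm (y - x))\<^sup>2" using FB[OF x that] by (simp add: g_def[symmetric] ign)
    thus ?thesis using ap by (simp add: field_simps)
  qed
  have hle: "h y \<le> lam/a" if "G y \<le> 1" "y \<noteq> x" for y
  proof -
    have "(norm (y - x))\<^sup>2 > 0" using that by simp
    thus ?thesis using fb[OF that(1)] by (simp add: h_def divide_le_eq)
  qed
  have bdH: "bdd_above H" unfolding H_def using hle by (auto intro: bdd_aboveI[of _ "lam/a"])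
  have zx: "z \<noteq> x" using neg by auto
  have z2: "(norm (z - x))\<^sup>2 > 0" using zx by simp
  have "a * inner n (z - x) > a * (lam / (2*c) * (norm (z - x))\<^sup>2)"
    using neg by (simp add: g_def[symmetric] ign a_def[symmetric] algebra_simps)
  hence "inner n (z - x) > lam / (2*c) * (norm (z - x))\<^sup>2" using mult_less_cancel_left_pos[OF ap] by blast
  hence hz: "h z > lam / (2*c)" using z2 by (simp add: h_def less_divide_eq)
  have hzH: "h z \<in> H" using z zx by (auto simp: H_def)
  hence neH: "H \<noteq> {}" by auto
  define S where "S = Sup H"
  have hS_upper: "h y \<le> S" if "G y \<le> 1" "y \<noteq> x" for y
    unfolding S_def by (rule cSup_upper[OF _ bdH]) (use that in \<open>auto simp: H_def\<close>)
  have Sgt: "S > lam / (2*c)" using hS_upper[OF z zx] hz by simp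
  have Sp: "S > 0" using Sgt lam_pos c_pos by (smt (verit) divide_pos_pos)
  have hS: "inner n (y - x) \<le> S * (norm (y - x))\<^sup>2" if "G y \<le> 1" for y
  proof (cases "y = x")
    case True thus ?thesis by simp
  next
    case False
    have "(norm (y - x))\<^sup>2 > 0" using False by simp
    thus ?thesis using hS_upper[OF that False] by (simp add: h_def divide_le_eq)
  qed
  have "2*c*S > lam" using Sgt c_pos by (simp add: field_simps)
  moreover have "(a+c)*S \<ge> 2*c*S" using ac Sp by (simp add: mult_right_mono)
  ultimately have dpos: "(a+c)*S - lam > 0" by linarith
  have "lam/(2*a) \<le> lam/(2*c)" using ac c_pos lam_pos by (simp add: frac_le)
  hence Sgta: "S > lam/(2*a)" using Sgt by simp
  define eta where "eta = (S - lam/(2*a))/2"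
  have eta: "eta > 0" using Sgta by (simp add: eta_def)
  obtain D0 where D0: "D0 > 0" and D0p: "\<And>w. G w \<le> 1 \<Longrightarrow> norm (w - x) < D0 \<Longrightarrow>
      inner (gradG x) (w - x) \<le> (lam/2 + eta * norm (gradG x)) * (norm (w - x))\<^sup>2"
    using LOC[OF x eta] by blast
  define sig where "sig = min (((a+c)*S - lam)/(3*c)) (S/3)"
  have sig: "sig > 0" "c * sig \<le> ((a+c)*S - lam)/3" "sig \<le> S/3"
  proof -
    show "sig > 0" using dpos c_pos Sp by (simp add: sig_def)
    have "sig \<le> ((a+c)*S - lam)/(3*c)" unfolding sig_def by (rule min.cobounded1)
    hence "c * sig \<le> c * (((a+c)*S - lam)/(3*c))" using c_pos by (intro mult_left_mono) auto
    thus "c * sig \<le> ((a+c)*S - lam)/3" using c_pos by simp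
    show "sig \<le> S/3" unfolding sig_def by (rule min.cobounded2)
  qed
  define rho where "rho = 1/(2*S)"
  have rp: "rho > 0" using Sp by (simp add: rho_def)
  have rS: "2 * rho * S = 1" using Sp by (simp add: rho_def)
  define q where "q = x + rho *\<^sub>R n"
  define k0 where "k0 = sig * D0"
  have k0: "k0 > 0" using sig D0 by (simp add: k0_def)
  obtain t1 where t1: "t1 > 0" "\<And>s. 0 \<le> s \<and> s \<le> t1 \<longrightarrow> mu s \<le> c * k0 / 4"
    using mu_small[of "c * k0 / 4"] c_pos k0 by auto
  define kap where "kap = min t1 (k0 * rho / 2) * k0 * rho / 2"
  have kap: "kap > 0" using t1 k0 rp by (simp add: kap_def)
  define eps where "eps = min (min (S/27) (((a+c)*S - lam)/(3*(a+9*c)))) (min (eta/2) (kap * S^3 / 8))"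
  have eps: "eps > 0" "eps \<le> S/27" "(a + 9*c) * eps \<le> ((a+c)*S - lam)/3" "eps \<le> eta/2" "eps \<le> kap * S^3 / 8"
  proof -
    show "eps > 0" using Sp dpos ap c_pos eta kap by (simp add: eps_def)
    show "eps \<le> S/27" unfolding eps_def by linarith
    have "eps \<le> ((a+c)*S - lam)/(3*(a+9*c))" unfolding eps_def by linarith
    hence "(a + 9*c) * eps \<le> (a + 9*c) * (((a+c)*S - lam)/(3*(a+9*c)))" using ap c_pos by (intro mult_left_mono) auto
    also have "(a + 9*c) * (((a+c)*S - lam)/(3*(a+9*c))) = ((a+c)*S - lam)/3"
      using ap c_pos by (simp add: field_simps)
    finally show "(a + 9*c) * eps \<le> ((a+c)*S - lam)/3" .
    show "eps \<le> eta/2" unfolding eps_def by linarith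
    show "eps \<le> kap * S^3 / 8" unfolding eps_def by linarith
  qed
  have "S - eps < Sup H" using eps by (simp add: S_def)
  then obtain hv where "hv \<in> H" "S - eps < hv" using less_cSup_iff[OF neH bdH] by blast
  then obtain z1 where z1: "G z1 \<le> 1" "z1 \<noteq> x" "h z1 > S - eps" by (auto simp: H_def)
  define v where "v = z1 - x"
  have v2: "(norm v)\<^sup>2 > 0" using z1 by (simp add: v_def)
  have Se: "S - eps > 0" using eps Sp by simp
  have nv: "inner n v > (S - eps) * (norm v)\<^sup>2" using z1(3) v2 by (simp add: h_def v_def less_divide_eq)
  have nvp: "inner n v > 0" using nv Se v2 by (smt (verit) mult_pos_pos)
  have "inner (gradG x) (z1 - x) > 0" using nvp ap by (simp add: g_def[symmetric] ign v_def)
  then obtain s where s: "0 < s" "s \<le> 1" "G (x + s *\<^sub>R (z1 - x)) = 1" "x + s *\<^sub>R (z1 - x) \<in> frontier Z"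
    using first_hit[OF x z1(1)] by blast
  define w where "w = x + s *\<^sub>R v"
  have Gw: "G w = 1" and wf: "w \<in> frontier Z" using s by (simp_all add: w_def v_def)
  define D where "D = norm (w - x)"
  have Dsv: "D = s * norm v" using s by (simp add: D_def w_def)
  define nwx where "nwx = inner n (w - x)"
  have nwxs: "nwx = s * inner n v" by (simp add: nwx_def w_def)
  have Dp: "D > 0" using s v2 Dsv by simp
  have K1: "nwx > (S - eps) * D^2"
  proof -
    have "s * inner n v > s * ((S - eps) * (norm v)\<^sup>2)" using nv s by simp
    moreover have "s * ((S - eps) * (norm v)\<^sup>2) \<ge> s * s * ((S - eps) * (norm v)\<^sup>2)"
      using s Se v2 by (intro mult_right_mono) (auto simp: mult_left_le_one_le)
    ultimately show ?thesis by (simp add: nwxs Dsv power2_eq_square algebra_simps)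
  qed
  have K2: "nwx \<le> S * D^2" using hS[of w] Gw by (simp add: nwx_def D_def)
  have DD0: "D \<ge> D0"
  proof (rule ccontr)
    assume "\<not> D \<ge> D0"
    hence "inner (gradG x) (w - x) \<le> (lam/2 + eta * norm (gradG x)) * (norm (w - x))\<^sup>2" using D0p[of w] Gw by (simp add: D_def)
    hence "a * nwx \<le> (lam/2 + eta * a) * D^2" by (simp add: g_def[symmetric] ign a_def[symmetric] nwx_def D_def)
    moreover have "a * ((lam/(2*a) + eta) * D^2) = (lam/2 + eta * a) * D^2" using ap by (simp add: field_simps)
    ultimately have "a * nwx \<le> a * ((lam/(2*a) + eta) * D^2)" by (simp only:)
    hence "nwx \<le> (lam/(2*a) + eta) * D^2" using ap by simp
    moreover have "lam/(2*a) + eta \<le> S - eps"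
    proof -
      have gen: "ll + (ss - ll)/2 \<le> ss - ee" if "ee \<le> (ss - ll)/2/2" "0 < (ss - ll)/2" for ll ee ss :: real
        using that by (simp add: field_simps)
      show ?thesis unfolding eta_def
        by (rule gen[of eps S "lam/(2*a)", OF eps(4)[unfolded eta_def] eta[unfolded eta_def]])
    qed
    hence "(lam/(2*a) + eta) * D^2 \<le> (S - eps) * D^2" by (intro mult_right_mono) auto
    ultimately show False using K1 by linarith
  qed
  have D2: "D \<le> 2/S"
  proof -
    have "nwx \<le> norm n * norm (w - x)" unfolding nwx_def by (rule norm_cauchy_schwarz)
    hence "nwx \<le> D" using nn by (simp add: D_def)
    hence "(S - eps) * D * D < D" using K1 by (simp add: power2_eq_square mult.assoc)
    hence "(S - eps) * D < 1" using Dp by simp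
    moreover have "(S/2) * D \<le> (S - eps) * D" using eps Dp by (intro mult_right_mono) auto
    ultimately have "(S/2) * D < 1" by linarith
    thus ?thesis using Sp by (simp add: field_simps)
  qed
  have ident: "(norm (y - q))\<^sup>2 = (norm (y - x))\<^sup>2 - 2 * rho * inner n (y - x) + rho^2" for y
  proof -
    have "y - q = (y - x) - rho *\<^sub>R n" by (simp add: q_def algebra_simps)
    hence "(norm (y - q))\<^sup>2 = (norm (y - x))\<^sup>2 - 2 * rho * inner n (y - x) + rho^2 * (norm n)\<^sup>2"
      by (simp only: norm_diff_scale)
    thus ?thesis using nn by simp
  qed
  have ball: "(norm (y - q))\<^sup>2 \<ge> rho^2" if "G y \<le> 1" for y
  proof -
    have "2 * rho * inner n (y - x) \<le> 2 * rho * (S * (norm (y - x))\<^sup>2)" using hS[OF that] rp by simp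
    also have "\<dots> = (norm (y - x))\<^sup>2" using rS by (simp add: algebra_simps)
    finally show ?thesis using ident[of y] by simp
  qed
  define R where "R = norm (w - q)"
  have R2: "R^2 = D^2 - 2 * rho * nwx + rho^2" using ident[of w] by (simp add: R_def D_def nwx_def)
  have Rge: "R \<ge> rho" using ball[of w] Gw rp by (simp add: R_def power2_le_iff_abs_le)
  have Rp: "R > 0" using Rge rp by simp
  have RR: "R^2 - rho^2 \<le> eps * D^2 / S"
  proof -
    have "2 * rho * nwx \<ge> 2 * rho * ((S - eps) * D^2)" using K1 rp by simp
    moreover have "2 * rho * ((S - eps) * D^2) = D^2 - eps * D^2 / S" using rS Sp by (simp add: rho_def field_simps)
    ultimately show ?thesis using R2 by simp
  qed
  have small: "R^2 - rho^2 < min t1 (k0 * R / 2) * k0 * R / 2"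
  proof -
    have "eps * D^2 / S \<le> eps * (2/S)^2 / S" using eps Dp D2 Sp by (intro divide_right_mono mult_left_mono power_mono) auto
    also have "\<dots> = 4 * eps / S^3" by (simp add: power2_eq_square power3_eq_cube)
    also have "\<dots> \<le> kap / 2" using eps Sp by (simp add: field_simps)
    also have "\<dots> < kap" using kap by simp
    also have "kap \<le> min t1 (k0 * R / 2) * k0 * R / 2"
    proof -
      have "k0 * rho / 2 \<le> k0 * R / 2" using Rge k0 by simp
      hence "min t1 (k0 * rho / 2) \<le> min t1 (k0 * R / 2)" by (intro min.mono) auto
      moreover have "min t1 (k0 * rho / 2) \<ge> 0" using t1 k0 rp by simp
      ultimately have "min t1 (k0 * rho / 2) * k0 * rho \<le> min t1 (k0 * R / 2) * k0 * R"
        using k0 Rge rp by (intro mult_mono) auto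
      thus ?thesis by (simp add: kap_def)
    qed
    finally show ?thesis using RR by linarith
  qed
  have th: "norm ((1 / R) *\<^sub>R (w - q) + (1 / norm (gradG w)) *\<^sub>R gradG w) \<le> k0"
    unfolding R_def by (rule TANG[OF wf rp ball k0 t1(1)]) (use t1 small in \<open>auto simp: R_def\<close>)
  define b where "b = norm (gradG w)"
  have bc: "b \<ge> c" using i[OF Gw] by (simp add: b_def)
  have bp: "b > 0" using bc c_pos by simp
  define e where "e = (1 / R) *\<^sub>R (w - q)"
  define nw where "nw = (1 / b) *\<^sub>R gradG w"
  define T1 where "T1 = inner e (w - x)"
  define T2 where "T2 = inner (e + nw) (x - w)"
  have g1: "a * nwx + b * (T2 + T1) \<le> lam * D^2"
  proof -
    have "inner (g - gradG w) (x - w) \<ge> - lam * (norm (x - w))\<^sup>2" using iii[OF x, of w] Gw by (simp add: g_def)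
    moreover have "inner g (x - w) = - (a * nwx)"
    proof -
      have "inner g (x - w) = - inner g (w - x)" by (simp add: inner_diff_right)
      thus ?thesis by (simp add: ign nwx_def)
    qed
    moreover have "inner (gradG w) (x - w) = b * (T2 + T1)"
    proof -
      have gw: "gradG w = b *\<^sub>R nw" using bp by (simp add: nw_def)
      have "inner nw (x - w) = T2 + T1"
        by (simp add: T1_def T2_def inner_add_left inner_diff_right)
      thus ?thesis by (simp add: gw)
    qed
    moreover have "norm (x - w) = D" by (simp add: D_def norm_minus_commute)
    ultimately show ?thesis by (simp add: inner_diff_left)
  qed
  have g2: "T2 \<ge> - sig * D^2"
  proof -
    have "\<bar>T2\<bar> \<le> norm (e + nw) * norm (x - w)" unfolding T2_def by (rule Cauchy_Schwarz_ineq2)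
    also have "norm (e + nw) \<le> k0" using th by (simp add: e_def nw_def b_def)
    hence "norm (e + nw) * norm (x - w) \<le> k0 * D" by (simp add: D_def norm_minus_commute mult_right_mono)
    also have "k0 * D \<le> sig * D * D" using DD0 sig Dp by (simp add: k0_def mult_left_mono mult_right_mono)
    finally show ?thesis by (simp add: power2_eq_square abs_le_iff mult.assoc)
  qed
  have g3: "T1 * R \<ge> rho * (S - eps) * D^2"
  proof -
    have "T1 * R = inner (w - q) (w - x)" using Rp by (simp add: T1_def e_def)
    also have "w - x = (w - q) + rho *\<^sub>R n" by (simp add: q_def)
    also have "inner (w - q) ((w - q) + rho *\<^sub>R n) = R^2 + rho * inner (w - q) n"
      by (simp add: inner_add_right R_def power2_norm_eq_inner)
    also have "inner (w - q) n = nwx - rho"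
    proof -
      have wq: "w - q = (w - x) - rho *\<^sub>R n" by (simp add: q_def)
      have "inner (w - q) n = inner (w - x) n - rho * inner n n" unfolding wq by (simp add: inner_diff_left)
      moreover have "inner n n = 1" using nn by (simp add: power2_norm_eq_inner[symmetric])
      moreover have "inner (w - x) n = nwx" by (simp add: nwx_def inner_commute)
      ultimately show ?thesis by simp
    qed
    finally have "T1 * R = R^2 - rho^2 + rho * nwx" by (simp add: power2_eq_square algebra_simps)
    moreover have "R^2 - rho^2 \<ge> 0" using Rge rp by (simp add: power_mono)
    moreover have "rho * nwx \<ge> rho * ((S - eps) * D^2)" using K1 rp by simp
    ultimately show ?thesis by simp
  qed
  have g4: "R \<le> rho + eps * D^2"
  proof -
    have "(R - rho) * (R + rho) = R^2 - rho^2" by (simp add: power2_eq_square algebra_simps)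
    hence "(R - rho) * (R + rho) \<le> eps * D^2 / S" using RR by simp
    moreover have "(R - rho) * (1/S) \<le> (R - rho) * (R + rho)"
    proof -
      have "1/S = 2 * rho" using rS Sp by (simp add: rho_def)
      hence "1/S \<le> R + rho" using Rge by simp
      thus ?thesis using Rge by (intro mult_left_mono) auto
    qed
    ultimately have "(R - rho) / S \<le> eps * D^2 / S" by simp
    thus ?thesis using Sp by (simp add: divide_le_cancel)
  qed
  have e0: "eps \<ge> 0" using eps(1) by simp
  have s0: "sig \<ge> 0" using sig(1) by simp
  have T1b: "T1 \<ge> (S - 9*eps) * D^2" by (rule T1_bound[OF Sp e0 eps(2) rho_def Rp g4 Dp D2 g3])
  show False by (rule FINAL_ARITH[OF c_pos ac bc Sp e0 eps(2) s0 sig(3) eps(3) sig(2) dpos g1 g2 T1b K1 Dp])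
qed

end

theorem lemma1p5:
  fixes G :: "'a::{real_inner, complete_space} \<Rightarrow> real"
    and gradG :: "'a \<Rightarrow> 'a"
    and mu :: "real \<Rightarrow> real"
    and lam c :: real
  assumes G_nonneg: "\<And>x. G x \<ge> 0"
    and grad: "\<And>x. is_gradient G x (gradG x)"
    and lam_pos: "lam > 0" and c_pos: "c > 0"
    and mu_cont: "continuous_on {0..} mu"
    and mu_mono: "mono_on {0..} mu"
    and mu_nonneg: "\<And>s. s \<ge> 0 \<Longrightarrow> mu s \<ge> 0"
    and mu_0: "mu 0 = 0"
    and mu_inf: "filterlim mu at_top at_top"
    and i: "\<And>x. G x = 1 \<Longrightarrow> norm (gradG x) \<ge> c"
    and ii: "\<And>x y. x \<in> {z. G z \<le> 1} \<Longrightarrow> y \<in> {z. G z \<le> 1} \<Longrightarrow>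
               norm (gradG x - gradG y) \<le> mu (norm (x - y))"
    and iii: "\<And>x z. x \<in> frontier {z. G z \<le> 1} \<Longrightarrow> z \<in> {z. G z \<le> 1} \<Longrightarrow>
               inner (gradG x - gradG z) (x - z) \<ge> - lam * (norm (x - z))\<^sup>2"
  shows "\<forall>x \<in> frontier {z. G z \<le> 1}. \<forall>z \<in> {z. G z \<le> 1}.
           inner (gradG x) (x - z) + norm (gradG x) / (2 * (c / lam)) * (norm (x - z))\<^sup>2 \<ge> 0"
proof -
  interpret lsetup G gradG mu lam c
    by (rule lsetup.intro[OF G_nonneg grad lam_pos c_pos mu_cont mu_mono mu_nonneg mu_0 mu_inf i ii iii])
  show ?thesis
  proof (intro ballI)
    fix x z assume x: "x \<in> frontier {z. G z \<le> 1}" and z: "z \<in> {z. G z \<le> 1}"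
    have M: "inner (gradG x) (z - x) \<le> norm (gradG x) * lam / (2*c) * (norm (z - x))\<^sup>2"
      using MAIN[OF x] z by simp
    have e1: "norm (gradG x) / (2 * (c / lam)) = norm (gradG x) * lam / (2*c)"
      using lam_pos c_pos by (simp add: field_simps)
    have e2: "inner (gradG x) (x - z) = - inner (gradG x) (z - x)" by (simp add: inner_diff_right)
    have e3: "norm (x - z) = norm (z - x)" by (rule norm_minus_commute)
    show "inner (gradG x) (x - z) + norm (gradG x) / (2 * (c / lam)) * (norm (x - z))\<^sup>2 \<ge> 0"
      unfolding e1 e2 e3 using M by linarith
  qed
qed

end
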